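(* Let $N$ be a positive even integer and $M_t,M_r$ positive integers, $K_{\min}=\min(M_t,M_r)$, $K_{\max}=\max(M_t,M_r)$, and $\theta\in\mathbb R$. Let $\hat{\mathbf G}\in\mathbb C^{N\times K_{\min}}$, $\hat{\mathbf G}_t'\in\mathbb C^{N\times(M_t-K_{\min})}$, $\hat{\mathbf G}_r'\in\mathbb C^{(M_r-K_{\min})\times N}$ be random matrices whose entries are all mutually independent circularly symmetric complex Gaussian with zero mean and unit variance, and set $\hat{\mathbf G}_t=[\hat{\mathbf G},\hat{\mathbf G}_t']\in\mathbb C^{N\times M_t}$ and $\hat{\mathbf G}_r=\begin{bmatrix}\hat{\mathbf G}^T\\ \hat{\mathbf G}_r'\end{bmatrix}\in\mathbb C^{M_r\times N}$. Let $\gamma_1^\star=\max_{\mathbf\Phi}\|\hat{\mathbf G}_t^T\mathbf\Phi^T\mathbf a(\theta)\|^2\|\hat{\mathbf G}_r\mathbf\Phi^T\mathbf a(\theta)\|^2$, the maximum over all $\mathbf\Phi=\mathrm{diag}(e^{j\phi_1},\dots,e^{j\phi_N})$ with $\phi_n\in\mathbb R$. Then $N^2\left(\frac{\pi(N-1)}{4}+K_{\min}\right)\left(\frac{\pi(N-1)}{4}+K_{\max}\right)\le\mathbb E[\gamma_1^\star]\le N^2\left(\left(M_t+M_r+\frac{1-3K_{\min}}{2}\right)K_{\min}N^2+2K_{\min}N\right).$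
   Context: $j=\sqrt{-1}$. Fix $\hat d>0$, $\lambda>0$; $\mathbf a(\theta)\in\mathbb C^N$ is the steering vector with $n$-th entry $e^{j\pi(2n-N-1)\hat d\sin\theta/\lambda}$, $n=1,\dots,N$. *)

theory Defs
  imports "HOL-Probability.Probability"
begin

text \<open>Circularly symmetric complex Gaussian, zero mean, unit variance:
  real and imaginary parts independent real normal with variance 1/2.\<close>
definition cgauss :: "complex measure" where
  "cgauss = distr
     (density lborel (normal_density 0 (sqrt (1/2))) \<Otimes>\<^sub>M density lborel (normal_density 0 (sqrt (1/2))))
     borel (\<lambda>(x, y). Complex x y)"

text \<open>Steering vector, 0-based index n (paper index n+1):
  entry exp(j pi (2(n+1) - N - 1) d sin theta / lambda).\<close>
definition steer :: "real \<Rightarrow> real \<Rightarrow> nat \<Rightarrow> real \<Rightarrow> nat \<Rightarrow> complex" where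
  "steer d lam N \<theta> n =
     exp (\<i> * complex_of_real (pi * (2 * (real n + 1) - real N - 1) * d * sin \<theta> / lam))"

text \<open>All random entries are packed in one function w :: nat \<times> nat \<times> nat \<Rightarrow> complex:
  w (0,n,k) = G(n,k) (n < N, k < Kmin), w (1,n,k) = G_t'(n,k) (k < Mt - Kmin),
  w (2,m,n) = G_r'(m,n) (m < Mr - Kmin).\<close>
definition chan_index :: "nat \<Rightarrow> nat \<Rightarrow> nat \<Rightarrow> (nat \<times> nat \<times> nat) set" where
  "chan_index N Mt Mr =
     ({0} \<times> {..<N} \<times> {..<min Mt Mr}) \<union>
     ({1} \<times> {..<N} \<times> {..<Mt - min Mt Mr}) \<union>
     ({2} \<times> {..<Mr - min Mt Mr} \<times> {..<N})"

definition chan_space :: "nat \<Rightarrow> nat \<Rightarrow> nat \<Rightarrow> (nat \<times> nat \<times> nat \<Rightarrow> complex) measure" where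
  "chan_space N Mt Mr = PiM (chan_index N Mt Mr) (\<lambda>_. cgauss)"

definition Gt :: "nat \<Rightarrow> (nat \<times> nat \<times> nat \<Rightarrow> complex) \<Rightarrow> nat \<Rightarrow> nat \<Rightarrow> complex" where
  "Gt K w n m = (if m < K then w (0, n, m) else w (1, n, m - K))"

definition Gr :: "nat \<Rightarrow> (nat \<times> nat \<times> nat \<Rightarrow> complex) \<Rightarrow> nat \<Rightarrow> nat \<Rightarrow> complex" where
  "Gr K w m n = (if m < K then w (0, n, m) else w (2, m - K, n))"

definition gain_obj ::
  "real \<Rightarrow> real \<Rightarrow> nat \<Rightarrow> nat \<Rightarrow> nat \<Rightarrow> real \<Rightarrow> (nat \<times> nat \<times> nat \<Rightarrow> complex) \<Rightarrow> (nat \<Rightarrow> real) \<Rightarrow> real" where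
  "gain_obj d lam N Mt Mr \<theta> w \<phi> =
     (let K = min Mt Mr; v = (\<lambda>n. exp (\<i> * complex_of_real (\<phi> n)) * steer d lam N \<theta> n) in
       (\<Sum>m<Mt. (cmod (\<Sum>n<N. Gt K w n m * v n))\<^sup>2) *
       (\<Sum>m<Mr. (cmod (\<Sum>n<N. Gr K w m n * v n))\<^sup>2))"

definition gamma1_star ::
  "real \<Rightarrow> real \<Rightarrow> nat \<Rightarrow> nat \<Rightarrow> nat \<Rightarrow> real \<Rightarrow> (nat \<times> nat \<times> nat \<Rightarrow> complex) \<Rightarrow> real" where
  "gamma1_star d lam N Mt Mr \<theta> w = (SUP \<phi>. gain_obj d lam N Mt Mr \<theta> w \<phi>)"

end

theory Submission
  imports Defs
begin

abbreviation nd :: "real \<Rightarrow> real" where "nd \<equiv> normal_density 0 (sqrt (1/2))"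

lemma nd_eq: "nd x = exp (- x\<^sup>2) / sqrt pi"
  by (simp add: normal_density_def real_sqrt_divide power_divide)

abbreviation "DD \<equiv> density lborel (\<lambda>x. ennreal (nd x))"

lemma prob_DD: "prob_space DD"
  by (rule prob_space_normal_density) simp

interpretation DD: prob_space DD by (rule prob_DD)

lemma meas_Complex[measurable]: "(\<lambda>(x, y). Complex x y) \<in> borel_measurable (borel \<Otimes>\<^sub>M borel)"
proof -
  have "(\<lambda>(x, y). Complex x y) = (\<lambda>p. complex_of_real (fst p) + \<i> * complex_of_real (snd p))"
    by (auto simp: fun_eq_iff complex_eq_iff)
  then show ?thesis by simp
qed

lemma cgauss_eq: "cgauss = distr (DD \<Otimes>\<^sub>M DD) borel (\<lambda>(x, y). Complex x y)"
  unfolding cgauss_def ..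

lemma sets_cgauss[simp, measurable_cong]: "sets cgauss = sets borel"
  by (simp add: cgauss_eq)

lemma space_cgauss[simp]: "space cgauss = UNIV"
  by (simp add: cgauss_eq)

interpretation DD2: pair_prob_space DD DD
  unfolding pair_prob_space_def pair_sigma_finite_def using prob_DD
  by (auto intro: prob_space_imp_sigma_finite)

lemma prob_cgauss: "prob_space cgauss"
  unfolding cgauss_eq by (rule DD2.prob_space_distr) simp

lemma cg_nn:
  assumes [measurable]: "f \<in> borel_measurable borel"
  shows "(\<integral>\<^sup>+z. f z \<partial>cgauss) = (\<integral>\<^sup>+x. \<integral>\<^sup>+y. ennreal (nd x) * ennreal (nd y) * f (Complex x y) \<partial>lborel \<partial>lborel)"
proof -
  have "(\<integral>\<^sup>+z. f z \<partial>cgauss) = (\<integral>\<^sup>+p. f (case p of (x, y) \<Rightarrow> Complex x y) \<partial>(DD \<Otimes>\<^sub>M DD))"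
    unfolding cgauss_eq by (subst nn_integral_distr) auto
  also have "\<dots> = (\<integral>\<^sup>+x. \<integral>\<^sup>+y. f (Complex x y) \<partial>DD \<partial>DD)"
    by (subst DD.nn_integral_fst[symmetric]) auto
  also have "\<dots> = (\<integral>\<^sup>+x. ennreal (nd x) * \<integral>\<^sup>+y. ennreal (nd y) * f (Complex x y) \<partial>lborel \<partial>lborel)"
    by (subst nn_integral_density; simp add: nn_integral_density)
  also have "\<dots> = (\<integral>\<^sup>+x. \<integral>\<^sup>+y. ennreal (nd x) * ennreal (nd y) * f (Complex x y) \<partial>lborel \<partial>lborel)"
    by (rule nn_integral_cong, subst nn_integral_cmult[symmetric]) (auto simp: mult.assoc)
  finally show ?thesis .
qed

lemma nd_poly:
  assumes "0 \<le> a" "0 \<le> b" "0 \<le> c"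
  shows "(\<integral>\<^sup>+y. ennreal (nd y * (a + b * y\<^sup>2 + c * y^4)) \<partial>lborel) = ennreal (a + b / 2 + 3 * c / 4)"
proof -
  have m0: "has_bochner_integral lborel (\<lambda>x. nd x) 1"
    using normal_moment_even[where k=0 and \<mu>=0 and \<sigma>="sqrt (1/2)"] by simp
  have m2: "has_bochner_integral lborel (\<lambda>x. nd x * x\<^sup>2) (1/2)"
    using normal_moment_even[where k=1 and \<mu>=0 and \<sigma>="sqrt (1/2)"] by (simp add: power_divide)
  have m4: "has_bochner_integral lborel (\<lambda>x. nd x * x^4) (3/4)"
    using normal_moment_even[where k=2 and \<mu>=0 and \<sigma>="sqrt (1/2)"] by (simp add: power_divide fact_numeral)
  have "has_bochner_integral lborel (\<lambda>y. nd y * a + nd y * y\<^sup>2 * b + nd y * y^4 * c) (1 * a + 1/2 * b + 3/4 * c)"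
    by (intro has_bochner_integral_add has_bochner_integral_mult_left m0 m2 m4)
  then have hb: "has_bochner_integral lborel (\<lambda>y. nd y * (a + b * y\<^sup>2 + c * y^4)) (a + b / 2 + 3 * c / 4)"
    by (simp add: algebra_simps)
  show ?thesis
    using assms
    by (subst nn_integral_eq_integral)
       (auto intro!: integrable.intros[OF hb] simp: has_bochner_integral_integral_eq[OF hb])
qed

lemma cmod_Complex_sq: "(cmod (Complex x y))\<^sup>2 = x\<^sup>2 + y\<^sup>2"
  by (simp add: cmod_power2)

lemma cg_abs2: "(\<integral>\<^sup>+z. ennreal ((cmod z)\<^sup>2) \<partial>cgauss) = 1"
proof -
  have "(\<integral>\<^sup>+z. ennreal ((cmod z)\<^sup>2) \<partial>cgauss) =
     (\<integral>\<^sup>+x. \<integral>\<^sup>+y. ennreal (nd x) * ennreal (nd y * (x\<^sup>2 + 1 * y\<^sup>2 + 0 * y^4)) \<partial>lborel \<partial>lborel)"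
    by (subst cg_nn) (auto simp: cmod_Complex_sq ennreal_mult[symmetric] mult.assoc simp del: ennreal_plus intro!: nn_integral_cong)
  also have "\<dots> = (\<integral>\<^sup>+x. ennreal (nd x * (1/2 + 1 * x\<^sup>2 + 0 * x^4)) \<partial>lborel)"
    apply (rule nn_integral_cong)
    apply (subst nn_integral_cmult, simp)
    apply (subst nd_poly, auto simp: ennreal_mult[symmetric] algebra_simps simp del: ennreal_plus)
    done
  also have "\<dots> = 1"
    by (subst nd_poly) auto
  finally show ?thesis .
qed

lemma cg_abs4: "(\<integral>\<^sup>+z. ennreal ((cmod z)^4) \<partial>cgauss) = 2"
proof -
  have e: "(cmod (Complex x y))^4 = x^4 + 2 * x\<^sup>2 * y\<^sup>2 + 1 * y^4" for x y
  proof -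
    have "(cmod (Complex x y))^4 = ((cmod (Complex x y))\<^sup>2)\<^sup>2" by simp
    then show ?thesis unfolding cmod_Complex_sq by (simp add: power2_eq_square power4_eq_xxxx algebra_simps)
  qed
  have "(\<integral>\<^sup>+z. ennreal ((cmod z)^4) \<partial>cgauss) =
     (\<integral>\<^sup>+x. \<integral>\<^sup>+y. ennreal (nd x) * ennreal (nd y * (x^4 + (2 * x\<^sup>2) * y\<^sup>2 + 1 * y^4)) \<partial>lborel \<partial>lborel)"
    by (subst cg_nn) (auto simp: e ennreal_mult[symmetric] mult.assoc simp del: ennreal_plus intro!: nn_integral_cong)
  also have "\<dots> = (\<integral>\<^sup>+x. ennreal (nd x * (3/4 + 1 * x\<^sup>2 + 1 * x^4)) \<partial>lborel)"
    apply (rule nn_integral_cong)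
    apply (subst nn_integral_cmult, simp)
    apply (subst nd_poly, auto simp: ennreal_mult[symmetric] algebra_simps simp del: ennreal_plus)
    done
  also have "\<dots> = 2"
    by (subst nd_poly) auto
  finally show ?thesis .
qed

lemma lborel_neg:
  fixes g :: "real \<Rightarrow> ennreal"
  assumes [measurable]: "g \<in> borel_measurable borel"
  shows "(\<integral>\<^sup>+y. g (- y) \<partial>lborel) = (\<integral>\<^sup>+y. g y \<partial>lborel)"
  using nn_integral_real_affine[of g "-1" 0] by simp

lemma nd_neg[simp]: "nd (- y) = nd y"
  by (simp add: normal_density_def)

lemma cg_neg:
  assumes [measurable]: "f \<in> borel_measurable borel"
  shows "(\<integral>\<^sup>+z. f (- z) \<partial>cgauss) = (\<integral>\<^sup>+z. f z \<partial>cgauss)"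
proof -
  have "(\<integral>\<^sup>+z. f (- z) \<partial>cgauss) =
     (\<integral>\<^sup>+x. \<integral>\<^sup>+y. ennreal (nd x) * ennreal (nd y) * f (Complex (- x) (- y)) \<partial>lborel \<partial>lborel)"
  proof -
    have "- Complex x y = Complex (- x) (- y)" for x y by (simp add: complex_eq_iff)
    then show ?thesis by (subst cg_nn) (auto intro!: nn_integral_cong)
  qed
  also have "\<dots> = (\<integral>\<^sup>+x. \<integral>\<^sup>+y. ennreal (nd x) * ennreal (nd y) * f (Complex (- x) y) \<partial>lborel \<partial>lborel)"
    by (rule nn_integral_cong, subst lborel_neg[symmetric]) auto
  also have "\<dots> = (\<integral>\<^sup>+x. \<integral>\<^sup>+y. ennreal (nd x) * ennreal (nd y) * f (Complex x y) \<partial>lborel \<partial>lborel)"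
    by (subst lborel_neg[symmetric]) auto
  also have "\<dots> = (\<integral>\<^sup>+z. f z \<partial>cgauss)"
    by (subst cg_nn) auto
  finally show ?thesis .
qed

interpretation CG: prob_space cgauss by (rule prob_cgauss)

lemma cg_UNIV[simp]: "emeasure cgauss UNIV = 1"
  using CG.emeasure_space_1 by simp

lemma cg_quad: "(\<integral>\<^sup>+z. ennreal ((cmod (a + c * z))\<^sup>2) \<partial>cgauss) = ennreal ((cmod a)\<^sup>2 + (cmod c)\<^sup>2)"
proof -
  let ?F = "\<lambda>z. ennreal ((cmod (a + c * z))\<^sup>2)"
  have par: "(cmod (a + c * z))\<^sup>2 + (cmod (a + c * - z))\<^sup>2 = 2 * (cmod a)\<^sup>2 + 2 * (cmod c)\<^sup>2 * (cmod z)\<^sup>2" for z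
    unfolding cmod_power2 by (simp add: power2_eq_square algebra_simps)
  have par2: "(cmod (a + c * z))\<^sup>2 + (cmod (a - c * z))\<^sup>2 = 2 * (cmod a)\<^sup>2 + 2 * (cmod c)\<^sup>2 * (cmod z)\<^sup>2" for z
    using par[of z] by simp
  have "(\<integral>\<^sup>+z. ?F z \<partial>cgauss) + (\<integral>\<^sup>+z. ?F z \<partial>cgauss) = (\<integral>\<^sup>+z. ?F z \<partial>cgauss) + (\<integral>\<^sup>+z. ?F (- z) \<partial>cgauss)"
    by (subst cg_neg) auto
  also have "\<dots> = (\<integral>\<^sup>+z. ?F z + ?F (- z) \<partial>cgauss)"
    by (rule nn_integral_add[symmetric]) auto
  also have "\<dots> = (\<integral>\<^sup>+z. ennreal (2 * (cmod a)\<^sup>2) + ennreal (2 * (cmod c)\<^sup>2) * ennreal ((cmod z)\<^sup>2) \<partial>cgauss)"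
    by (rule nn_integral_cong) (simp add: ennreal_plus[symmetric] ennreal_mult[symmetric] par2 del: ennreal_plus)
  also have "\<dots> = ennreal (2 * (cmod a)\<^sup>2) + ennreal (2 * (cmod c)\<^sup>2)"
    by (subst nn_integral_add) (auto simp: nn_integral_cmult cg_abs2 CG.emeasure_space_1)
  also have "\<dots> = ennreal ((cmod a)\<^sup>2 + (cmod c)\<^sup>2) + ennreal ((cmod a)\<^sup>2 + (cmod c)\<^sup>2)"
    by (simp add: ennreal_plus[symmetric] del: ennreal_plus)
  finally have "2 * (\<integral>\<^sup>+z. ?F z \<partial>cgauss) = 2 * ennreal ((cmod a)\<^sup>2 + (cmod c)\<^sup>2)"
    by (simp add: mult_2)
  then show ?thesis
    by (subst (asm) ennreal_mult_cancel_left) auto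
qed

lemma gauss2:
  assumes a: "0 < a"
  shows "(\<integral>\<^sup>+x. ennreal (x\<^sup>2 * exp (- (a * x\<^sup>2))) \<partial>lborel) = ennreal (sqrt pi / (2 * a * sqrt a))"
proof -
  define \<sigma> where "\<sigma> = 1 / sqrt (2 * a)"
  have sp: "0 < \<sigma>" using a by (simp add: \<sigma>_def)
  have s2: "\<sigma>\<^sup>2 = 1 / (2 * a)" using a by (simp add: \<sigma>_def power_divide)
  have hb: "has_bochner_integral lborel (\<lambda>x. normal_density 0 \<sigma> x * x\<^sup>2) (\<sigma>\<^sup>2)"
    using normal_moment_even[where k=1 and \<mu>=0 and \<sigma>=\<sigma>] sp by (simp add: power_divide)
  have "has_bochner_integral lborel (\<lambda>x. normal_density 0 \<sigma> x * x\<^sup>2 * sqrt (pi / a)) (\<sigma>\<^sup>2 * sqrt (pi / a))"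
    by (rule has_bochner_integral_mult_left[OF hb])
  moreover have "(\<lambda>x. normal_density 0 \<sigma> x * x\<^sup>2 * sqrt (pi / a)) = (\<lambda>x. x\<^sup>2 * exp (- (a * x\<^sup>2)))"
  proof
    fix x
    have "2 * pi * \<sigma>\<^sup>2 = pi / a" using a s2 by simp
    moreover have "x\<^sup>2 / (2 * \<sigma>\<^sup>2) = a * x\<^sup>2" using a s2 by simp
    ultimately show "normal_density 0 \<sigma> x * x\<^sup>2 * sqrt (pi / a) = x\<^sup>2 * exp (- (a * x\<^sup>2))"
      using a by (simp add: normal_density_def)
  qed
  moreover have "\<sigma>\<^sup>2 * sqrt (pi / a) = sqrt pi / (2 * a * sqrt a)"
    using a by (simp add: s2 real_sqrt_divide)
  ultimately have hb2: "has_bochner_integral lborel (\<lambda>x. x\<^sup>2 * exp (- (a * x\<^sup>2))) (sqrt pi / (2 * a * sqrt a))"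
    by simp
  show ?thesis
    by (subst nn_integral_eq_integral)
       (auto intro!: integrable.intros[OF hb2] simp: has_bochner_integral_integral_eq[OF hb2])
qed

lemma arctan_half:
  "(\<integral>\<^sup>+s. ennreal (1 / (1 + s\<^sup>2)) * indicator {0..} s \<partial>lborel) = ennreal (pi / 2)"
proof -
  have "(\<integral>\<^sup>+s\<in>{0..}. ennreal (1 / (1 + s\<^sup>2)) \<partial>lborel) = ennreal (pi / 2 - arctan 0)"
  proof (rule nn_integral_FTC_atLeast)
    show "(arctan \<longlongrightarrow> pi / 2) at_top" by (rule tendsto_arctan_at_top)
  qed (auto intro!: derivative_eq_intros simp: add_pos_nonneg power2_eq_square inverse_eq_divide)
  then show ?thesis by simp
qed

lemma arctan_full:
  "(\<integral>\<^sup>+s. ennreal (1 / (1 + s\<^sup>2)) \<partial>lborel) = ennreal pi"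
proof -
  let ?f = "\<lambda>s::real. ennreal (1 / (1 + s\<^sup>2))"
  have "(\<integral>\<^sup>+s. ?f s \<partial>lborel) = (\<integral>\<^sup>+s. ?f s * indicator {0<..} s + ?f s * indicator {..0} s \<partial>lborel)"
    by (rule nn_integral_cong) (auto split: split_indicator)
  also have "\<dots> = (\<integral>\<^sup>+s. ?f s * indicator {0<..} s \<partial>lborel) + (\<integral>\<^sup>+s. ?f s * indicator {..0} s \<partial>lborel)"
    by (rule nn_integral_add) auto
  also have "(\<integral>\<^sup>+s. ?f s * indicator {0<..} s \<partial>lborel) = (\<integral>\<^sup>+s. ?f s * indicator {0..} s \<partial>lborel)"
    by (rule nn_integral_cong_AE, rule AE_mp[OF AE_lborel_singleton[of 0]]) (auto split: split_indicator)
  also have "(\<integral>\<^sup>+s. ?f s * indicator {..0} s \<partial>lborel) = (\<integral>\<^sup>+s. ?f (- s) * indicator {..0} (- s) \<partial>lborel)"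
    by (rule lborel_neg[symmetric]) auto
  also have "\<dots> = (\<integral>\<^sup>+s. ?f s * indicator {0..} s \<partial>lborel)"
    by (rule nn_integral_cong) (auto split: split_indicator)
  finally show ?thesis
    by (simp add: arctan_half ennreal_plus[symmetric] del: ennreal_plus)
qed

lemma cg_abs1: "(\<integral>\<^sup>+z. ennreal (cmod z) \<partial>cgauss) = ennreal (sqrt pi / 2)"
proof -
  define H where "H x y = exp (- x\<^sup>2 - y\<^sup>2) / pi * sqrt (x\<^sup>2 + y\<^sup>2)" for x y :: real
  define Kf where "Kf x s = x\<^sup>2 * exp (- ((1 + s\<^sup>2) * x\<^sup>2)) * (sqrt (1 + s\<^sup>2) / pi)" for x s :: real
  have H_meas[measurable]: "(\<lambda>(x, y). H x y) \<in> borel_measurable (borel \<Otimes>\<^sub>M borel)"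
    unfolding H_def by measurable
  have "(\<integral>\<^sup>+z. ennreal (cmod z) \<partial>cgauss) = (\<integral>\<^sup>+x. \<integral>\<^sup>+y. ennreal (H x y) \<partial>lborel \<partial>lborel)"
  proof -
    have "ennreal (nd x) * ennreal (nd y) * ennreal (cmod (Complex x y)) = ennreal (H x y)" for x y
    proof -
      have "cmod (Complex x y) = sqrt (x\<^sup>2 + y\<^sup>2)" by (simp add: cmod_def)
      moreover have "nd x * nd y = exp (- x\<^sup>2 - y\<^sup>2) / pi"
        by (simp add: nd_eq exp_diff exp_minus field_simps)
      ultimately show ?thesis
        by (simp add: H_def ennreal_mult[symmetric])
    qed
    then show ?thesis by (subst cg_nn) auto
  qed
  also have "\<dots> = (\<integral>\<^sup>+x. \<integral>\<^sup>+s. ennreal (Kf x s) \<partial>lborel \<partial>lborel)"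
  proof (rule nn_integral_cong_AE, rule AE_mp[OF AE_lborel_singleton[of 0]], rule AE_I2, rule impI)
    fix x :: real assume x: "x \<noteq> 0"
    have "(\<integral>\<^sup>+y. ennreal (H x y) \<partial>lborel) = ennreal \<bar>x\<bar> * (\<integral>\<^sup>+s. ennreal (H x (0 + x * s)) \<partial>lborel)"
      using x by (intro nn_integral_real_affine) auto
    also have "\<dots> = (\<integral>\<^sup>+s. ennreal (Kf x s) \<partial>lborel)"
    proof (subst nn_integral_cmult[symmetric], simp, rule nn_integral_cong)
      fix s
      have "sqrt (x\<^sup>2 + (x * s)\<^sup>2) = \<bar>x\<bar> * sqrt (1 + s\<^sup>2)"
      proof -
        have "x\<^sup>2 + (x * s)\<^sup>2 = x\<^sup>2 * (1 + s\<^sup>2)" by (simp add: algebra_simps power_mult_distrib)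
        then show ?thesis by (simp add: real_sqrt_mult)
      qed
      moreover have "exp (- x\<^sup>2 - (x * s)\<^sup>2) = exp (- ((1 + s\<^sup>2) * x\<^sup>2))"
        by (simp add: power_mult_distrib algebra_simps)
      ultimately show "ennreal \<bar>x\<bar> * ennreal (H x (0 + x * s)) = ennreal (Kf x s)"
        by (simp add: H_def Kf_def ennreal_mult[symmetric] power2_eq_square abs_mult_self_eq)
    qed
    finally show "(\<integral>\<^sup>+y. ennreal (H x y) \<partial>lborel) = (\<integral>\<^sup>+s. ennreal (Kf x s) \<partial>lborel)" .
  qed
  also have "\<dots> = (\<integral>\<^sup>+s. \<integral>\<^sup>+x. ennreal (Kf x s) \<partial>lborel \<partial>lborel)"
    by (rule lborel_pair.Fubini') (simp add: Kf_def)
  also have "\<dots> = (\<integral>\<^sup>+s. ennreal (1 / (2 * sqrt pi)) * ennreal (1 / (1 + s\<^sup>2)) \<partial>lborel)"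
  proof (rule nn_integral_cong)
    fix s :: real
    have a: "0 < 1 + s\<^sup>2" by (simp add: add_pos_nonneg)
    have "(\<integral>\<^sup>+x. ennreal (Kf x s) \<partial>lborel) =
        (\<integral>\<^sup>+x. ennreal (x\<^sup>2 * exp (- ((1 + s\<^sup>2) * x\<^sup>2))) * ennreal (sqrt (1 + s\<^sup>2) / pi) \<partial>lborel)"
      by (rule nn_integral_cong) (simp add: Kf_def ennreal_mult[symmetric])
    also have "\<dots> = ennreal (sqrt pi / (2 * (1 + s\<^sup>2) * sqrt (1 + s\<^sup>2))) * ennreal (sqrt (1 + s\<^sup>2) / pi)"
      by (subst nn_integral_multc) (auto simp: gauss2[OF a])
    also have "\<dots> = ennreal (1 / (2 * sqrt pi)) * ennreal (1 / (1 + s\<^sup>2))"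
    proof -
      have "sqrt pi / (2 * (1 + s\<^sup>2) * sqrt (1 + s\<^sup>2)) * (sqrt (1 + s\<^sup>2) / pi) = 1 / (2 * sqrt pi) * (1 / (1 + s\<^sup>2))"
      proof -
        have gen: "p / (2 * b * q) * (q / (p * p)) = 1 / (2 * p) * (1 / b)" if "p > 0" "q > 0" "b > 0" for p q b :: real
          using that by (simp add: field_simps)
        show ?thesis using gen[of "sqrt pi" "sqrt (1 + s\<^sup>2)" "1 + s\<^sup>2"] a by simp
      qed
      then show ?thesis using a by (simp add: ennreal_mult[symmetric])
    qed
    finally show "(\<integral>\<^sup>+x. ennreal (Kf x s) \<partial>lborel) = ennreal (1 / (2 * sqrt pi)) * ennreal (1 / (1 + s\<^sup>2))" .
  qed
  also have "\<dots> = ennreal (1 / (2 * sqrt pi)) * ennreal pi"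
    by (subst nn_integral_cmult) (auto simp: arctan_full)
  also have "\<dots> = ennreal (sqrt pi / 2)"
  proof -
    have "1 / (2 * sqrt pi) * pi = sqrt pi / 2"
    proof -
      have gen: "1 / (2 * p) * (p * p) = p / 2" if "p > 0" for p :: real
        using that by (simp add: field_simps power2_eq_square)
      show ?thesis using gen[of "sqrt pi"] by simp
    qed
    then show ?thesis by (simp add: ennreal_mult[symmetric])
  qed
  finally show ?thesis .
qed

abbreviation PM :: "'i set \<Rightarrow> ('i \<Rightarrow> complex) measure" where "PM I \<equiv> PiM I (\<lambda>_. cgauss)"

lemma PS: "product_sigma_finite (\<lambda>_::'i. cgauss)"
  unfolding product_sigma_finite_def using prob_cgauss by (auto intro: prob_space_imp_sigma_finite)

lemma PM_prob: "prob_space (PM I)"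
  by (intro prob_space_PiM prob_cgauss)

lemma meas_coord: "(\<lambda>w. w j) \<in> borel_measurable (PM I)"
proof (cases "j \<in> I")
  case True
  have e: "measurable (PM I) cgauss = measurable (PM I) borel"
    by (rule measurable_cong_sets) (rule refl, rule sets_cgauss)
  have "(\<lambda>w. w j) \<in> measurable (PM I) cgauss" using True by (rule measurable_component_singleton)
  then show ?thesis unfolding e .
next
  case False
  have u: "\<And>w. w \<in> space (PM I) \<Longrightarrow> w j = undefined"
    using False by (auto simp: space_PiM PiE_def extensional_def)
  show ?thesis using measurable_cong[of "PM I" "\<lambda>w. w j" "\<lambda>_. undefined" borel] u by auto
qed

lemma lemM:
  fixes F :: "('i \<Rightarrow> complex) \<times> complex \<Rightarrow> ennreal"
  assumes fin: "finite I" and i: "i \<in> I"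
    and F[measurable]: "F \<in> borel_measurable (PM I \<Otimes>\<^sub>M cgauss)"
    and dep: "\<And>w w' z. (\<And>j. j \<noteq> i \<Longrightarrow> w j = w' j) \<Longrightarrow> F (w, z) = F (w', z)"
  shows "(\<integral>\<^sup>+w. F (w, w i) \<partial>PM I) = (\<integral>\<^sup>+w. \<integral>\<^sup>+z. F (w, z) \<partial>cgauss \<partial>PM I)"
proof -
  define J where "J = I - {i}"
  have IJ: "I = insert i J" "i \<notin> J" "finite J" using i fin by (auto simp: J_def)
  have "(\<lambda>w. (w, w i)) \<in> measurable (PM I) (PM I \<Otimes>\<^sub>M cgauss)"
    by (intro measurable_Pair measurable_ident_sets refl measurable_component_singleton i)
  then have m1: "(\<lambda>w. F (w, w i)) \<in> borel_measurable (PM (insert i J))"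
    unfolding IJ(1)[symmetric] by (rule measurable_compose[OF _ F])
  have m2: "(\<lambda>w. \<integral>\<^sup>+z. F (w, z) \<partial>cgauss) \<in> borel_measurable (PM (insert i J))"
    unfolding IJ(1)[symmetric] using CG.borel_measurable_nn_integral[of "\<lambda>w z. F (w, z)" "PM I"] F by simp
  have "(\<integral>\<^sup>+w. F (w, w i) \<partial>PM I) = (\<integral>\<^sup>+x. \<integral>\<^sup>+y. F (x(i := y), y) \<partial>cgauss \<partial>PM J)"
    unfolding IJ(1) by (subst product_sigma_finite.product_nn_integral_insert[OF PS IJ(3,2) m1]) simp
  also have "\<dots> = (\<integral>\<^sup>+x. \<integral>\<^sup>+y. F (x(i := 0), y) \<partial>cgauss \<partial>PM J)"
    by (intro nn_integral_cong, rule dep) auto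
  also have "\<dots> = (\<integral>\<^sup>+x. \<integral>\<^sup>+y. (\<integral>\<^sup>+z. F (x(i := 0), z) \<partial>cgauss) \<partial>cgauss \<partial>PM J)"
    by (simp add: nn_integral_const)
  also have "\<dots> = (\<integral>\<^sup>+x. \<integral>\<^sup>+y. (\<integral>\<^sup>+z. F (x(i := y), z) \<partial>cgauss) \<partial>cgauss \<partial>PM J)"
    by (intro nn_integral_cong, rule dep) auto
  also have "\<dots> = (\<integral>\<^sup>+w. \<integral>\<^sup>+z. F (w, z) \<partial>cgauss \<partial>PM I)"
    unfolding IJ(1) by (subst product_sigma_finite.product_nn_integral_insert[OF PS IJ(3,2) m2]) simp
  finally show ?thesis .
qed

lemma lemE:
  fixes h :: "('i \<Rightarrow> complex) \<Rightarrow> ennreal" and f :: "complex \<Rightarrow> ennreal"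
  assumes fin: "finite I" and i: "i \<in> I"
    and [measurable]: "h \<in> borel_measurable (PM I)" "f \<in> borel_measurable borel"
    and dep: "\<And>w w'. (\<And>j. j \<noteq> i \<Longrightarrow> w j = w' j) \<Longrightarrow> h w = h w'"
  shows "(\<integral>\<^sup>+w. h w * f (w i) \<partial>PM I) = (\<integral>\<^sup>+w. h w \<partial>PM I) * (\<integral>\<^sup>+z. f z \<partial>cgauss)"
proof -
  have mF: "(\<lambda>(w, z). h w * f z) \<in> borel_measurable (PM I \<Otimes>\<^sub>M cgauss)" by measurable
  have dF: "(\<lambda>(w, z). h w * f z) (w, z) = (\<lambda>(w, z). h w * f z) (w', z)"
    if "\<And>j. j \<noteq> i \<Longrightarrow> w j = w' j" for w w' z
  proof -
    have "h w = h w'" using that by (rule dep)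
    then show ?thesis by simp
  qed
  have "(\<integral>\<^sup>+w. h w * f (w i) \<partial>PM I) = (\<integral>\<^sup>+w. \<integral>\<^sup>+z. h w * f z \<partial>cgauss \<partial>PM I)"
    using lemM[OF fin i mF dF] by simp
  also have "\<dots> = (\<integral>\<^sup>+w. h w * (\<integral>\<^sup>+z. f z \<partial>cgauss) \<partial>PM I)"
  proof (rule nn_integral_cong)
    fix w
    have fm: "f \<in> borel_measurable cgauss" by measurable
    show "(\<integral>\<^sup>+z. h w * f z \<partial>cgauss) = h w * (\<integral>\<^sup>+z. f z \<partial>cgauss)"
      by (rule nn_integral_cmult[OF fm])
  qed
  also have "\<dots> = (\<integral>\<^sup>+w. h w \<partial>PM I) * (\<integral>\<^sup>+z. f z \<partial>cgauss)"
    by (rule nn_integral_multc) simp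
  finally show ?thesis .
qed

lemma lemC1:
  fixes h :: "('i \<Rightarrow> complex) \<Rightarrow> ennreal" and A C :: "('i \<Rightarrow> complex) \<Rightarrow> complex"
  assumes fin: "finite I" and i: "i \<in> I"
    and [measurable]: "h \<in> borel_measurable (PM I)" "A \<in> borel_measurable (PM I)" "C \<in> borel_measurable (PM I)"
    and dep: "\<And>w w'. (\<And>j. j \<noteq> i \<Longrightarrow> w j = w' j) \<Longrightarrow> h w = h w' \<and> A w = A w' \<and> C w = C w'"
  shows "(\<integral>\<^sup>+w. h w * ennreal ((cmod (A w + C w * w i))\<^sup>2) \<partial>PM I) =
         (\<integral>\<^sup>+w. h w * ennreal ((cmod (A w))\<^sup>2 + (cmod (C w))\<^sup>2) \<partial>PM I)"
proof -
  have mF: "(\<lambda>(w, z). h w * ennreal ((cmod (A w + C w * z))\<^sup>2)) \<in> borel_measurable (PM I \<Otimes>\<^sub>M cgauss)"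
    by measurable
  have dF: "(\<lambda>(w, z). h w * ennreal ((cmod (A w + C w * z))\<^sup>2)) (w, z) = (\<lambda>(w, z). h w * ennreal ((cmod (A w + C w * z))\<^sup>2)) (w', z)"
    if "\<And>j. j \<noteq> i \<Longrightarrow> w j = w' j" for w w' z
  proof -
    have "h w = h w' \<and> A w = A w' \<and> C w = C w'" using that by (rule dep)
    then show ?thesis by simp
  qed
  have "(\<integral>\<^sup>+w. h w * ennreal ((cmod (A w + C w * w i))\<^sup>2) \<partial>PM I) =
      (\<integral>\<^sup>+w. \<integral>\<^sup>+z. h w * ennreal ((cmod (A w + C w * z))\<^sup>2) \<partial>cgauss \<partial>PM I)"
    using lemM[OF fin i mF dF] by simp
  also have "\<dots> = (\<integral>\<^sup>+w. h w * ennreal ((cmod (A w))\<^sup>2 + (cmod (C w))\<^sup>2) \<partial>PM I)"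
  proof (rule nn_integral_cong)
    fix w
    have "(\<integral>\<^sup>+z. h w * ennreal ((cmod (A w + C w * z))\<^sup>2) \<partial>cgauss) = h w * (\<integral>\<^sup>+z. ennreal ((cmod (A w + C w * z))\<^sup>2) \<partial>cgauss)"
      by (rule nn_integral_cmult) measurable
    then show "(\<integral>\<^sup>+z. h w * ennreal ((cmod (A w + C w * z))\<^sup>2) \<partial>cgauss) = h w * ennreal ((cmod (A w))\<^sup>2 + (cmod (C w))\<^sup>2)"
      by (simp only: cg_quad)
  qed
  finally show ?thesis .
qed

lemma lemC:
  fixes h :: "('i \<Rightarrow> complex) \<Rightarrow> ennreal" and c :: "nat \<Rightarrow> ('i \<Rightarrow> complex) \<Rightarrow> complex"
    and \<iota> :: "nat \<Rightarrow> 'i"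
  assumes fin: "finite I" and inj: "inj_on \<iota> {..<n}" and sub: "\<iota> ` {..<n} \<subseteq> I"
    and hm[measurable]: "h \<in> borel_measurable (PM I)" and cm[measurable]: "\<And>k. c k \<in> borel_measurable (PM I)"
    and dep: "\<And>w w'. (\<And>j. j \<notin> \<iota> ` {..<n} \<Longrightarrow> w j = w' j) \<Longrightarrow> h w = h w' \<and> (\<forall>k<n. c k w = c k w')"
  shows "(\<integral>\<^sup>+w. h w * ennreal ((cmod (\<Sum>k<n. c k w * w (\<iota> k)))\<^sup>2) \<partial>PM I) =
         (\<integral>\<^sup>+w. h w * ennreal (\<Sum>k<n. (cmod (c k w))\<^sup>2) \<partial>PM I)"
  using inj sub dep
proof (induction n)
  case 0
  then show ?case by simp
next
  case (Suc n)
  have inj': "inj_on \<iota> {..<n}" using Suc.prems(1) by (rule inj_on_subset) auto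
  have sub': "\<iota> ` {..<n} \<subseteq> I" using Suc.prems(2) by auto
  have dep': "h w = h w' \<and> (\<forall>k<n. c k w = c k w')" if "\<And>j. j \<notin> \<iota> ` {..<n} \<Longrightarrow> w j = w' j" for w w'
  proof -
    have "w j = w' j" if "j \<notin> \<iota> ` {..<Suc n}" for j
    proof -
      from that have "j \<notin> \<iota> ` {..<n}" by auto
      then show ?thesis by (rule \<open>\<And>j. j \<notin> \<iota> ` {..<n} \<Longrightarrow> w j = w' j\<close>)
    qed
    from Suc.prems(3)[OF this] show ?thesis by auto
  qed
  have IH: "(\<integral>\<^sup>+w. h w * ennreal ((cmod (\<Sum>k<n. c k w * w (\<iota> k)))\<^sup>2) \<partial>PM I) =
         (\<integral>\<^sup>+w. h w * ennreal (\<Sum>k<n. (cmod (c k w))\<^sup>2) \<partial>PM I)"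
    by (rule Suc.IH[OF inj' sub' dep'])
  have i: "\<iota> n \<in> I" using Suc.prems(2) by auto
  have depi: "h w = h w' \<and> (\<Sum>k<n. c k w * w (\<iota> k)) = (\<Sum>k<n. c k w' * w' (\<iota> k)) \<and> c n w = c n w'"
    if eq: "\<And>j. j \<noteq> \<iota> n \<Longrightarrow> w j = w' j" for w w'
  proof -
    have "\<And>j. j \<notin> \<iota> ` {..<Suc n} \<Longrightarrow> w j = w' j" using eq by auto
    then have d: "h w = h w' \<and> (\<forall>k<Suc n. c k w = c k w')"
      using Suc.prems(3) by blast
    have "w (\<iota> k) = w' (\<iota> k)" if "k < n" for k
    proof -
      have "\<iota> k \<noteq> \<iota> n" using Suc.prems(1) that by (auto dest: inj_onD)
      then show ?thesis by (rule eq)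
    qed
    then show ?thesis using d by (auto intro!: sum.cong)
  qed
  define A where "A = (\<lambda>w. \<Sum>k<n. c k w * w (\<iota> k))"
  have mA[measurable]: "A \<in> borel_measurable (PM I)"
    unfolding A_def by (intro borel_measurable_sum borel_measurable_times cm meas_coord)
  have mC[measurable]: "c n \<in> borel_measurable (PM I)" by (rule cm)
  have IH': "(\<integral>\<^sup>+w. h w * ennreal ((cmod (A w))\<^sup>2) \<partial>PM I) =
         (\<integral>\<^sup>+w. h w * ennreal (\<Sum>k<n. (cmod (c k w))\<^sup>2) \<partial>PM I)"
    unfolding A_def by (rule IH)
  have mS[measurable]: "(\<lambda>w. \<Sum>k<n. (cmod (c k w))\<^sup>2) \<in> borel_measurable (PM I)"
  proof (intro borel_measurable_sum)
    fix k
    have [measurable]: "c k \<in> borel_measurable (PM I)" by (rule cm)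
    show "(\<lambda>w. (cmod (c k w))\<^sup>2) \<in> borel_measurable (PM I)" by measurable
  qed
  have "(\<integral>\<^sup>+w. h w * ennreal ((cmod (\<Sum>k<Suc n. c k w * w (\<iota> k)))\<^sup>2) \<partial>PM I) =
      (\<integral>\<^sup>+w. h w * ennreal ((cmod (A w + c n w * w (\<iota> n)))\<^sup>2) \<partial>PM I)"
    by (simp add: A_def)
  also have "\<dots> = (\<integral>\<^sup>+w. h w * ennreal ((cmod (A w))\<^sup>2 + (cmod (c n w))\<^sup>2) \<partial>PM I)"
    apply (rule lemC1[OF fin i hm mA cm])
    unfolding A_def
    apply (rule depi)
    apply assumption
    done
  also have "\<dots> = (\<integral>\<^sup>+w. h w * ennreal ((cmod (A w))\<^sup>2) + h w * ennreal ((cmod (c n w))\<^sup>2) \<partial>PM I)"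
    by (intro nn_integral_cong) (simp only: ennreal_plus[OF zero_le_power2 zero_le_power2] distrib_left)
  also have "\<dots> = (\<integral>\<^sup>+w. h w * ennreal ((cmod (A w))\<^sup>2) \<partial>PM I) + (\<integral>\<^sup>+w. h w * ennreal ((cmod (c n w))\<^sup>2) \<partial>PM I)"
    by (rule nn_integral_add) measurable
  also have "\<dots> = (\<integral>\<^sup>+w. h w * ennreal (\<Sum>k<n. (cmod (c k w))\<^sup>2) \<partial>PM I) + (\<integral>\<^sup>+w. h w * ennreal ((cmod (c n w))\<^sup>2) \<partial>PM I)"
    by (simp only: IH')
  also have "\<dots> = (\<integral>\<^sup>+w. h w * ennreal (\<Sum>k<n. (cmod (c k w))\<^sup>2) + h w * ennreal ((cmod (c n w))\<^sup>2) \<partial>PM I)"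
    by (rule nn_integral_add[symmetric]) measurable
  also have "\<dots> = (\<integral>\<^sup>+w. h w * ennreal (\<Sum>k<Suc n. (cmod (c k w))\<^sup>2) \<partial>PM I)"
  proof (intro nn_integral_cong)
    fix w
    have "ennreal (\<Sum>k<Suc n. (cmod (c k w))\<^sup>2) = ennreal (\<Sum>k<n. (cmod (c k w))\<^sup>2) + ennreal ((cmod (c n w))\<^sup>2)"
      by (simp only: sum.lessThan_Suc, rule ennreal_plus, rule sum_nonneg, auto)
    then show "h w * ennreal (\<Sum>k<n. (cmod (c k w))\<^sup>2) + h w * ennreal ((cmod (c n w))\<^sup>2) = h w * ennreal (\<Sum>k<Suc n. (cmod (c k w))\<^sup>2)"
      by (simp only: distrib_left)
  qed
  finally show ?case .
qed

lemma I1: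
  assumes v: "\<And>n. n < N \<Longrightarrow> cmod (v n) = 1"
  shows "(cmod (\<Sum>n<N. c n * v n))\<^sup>2 \<le> real N * (\<Sum>n<N. (cmod (c n))\<^sup>2)"
proof -
  have "cmod (\<Sum>n<N. c n * v n) \<le> (\<Sum>n<N. cmod (c n * v n))" by (rule norm_sum)
  also have "\<dots> = (\<Sum>n<N. cmod (c n))" using v by (simp add: norm_mult)
  finally have a: "cmod (\<Sum>n<N. c n * v n) \<le> (\<Sum>n<N. cmod (c n))" .
  have "(cmod (\<Sum>n<N. c n * v n))\<^sup>2 \<le> (\<Sum>n<N. cmod (c n))\<^sup>2"
    using a by (intro power_mono) auto
  also have "\<dots> \<le> (\<Sum>n<N. (cmod (c n))\<^sup>2) * real (card {..<N})"
    by (rule sum_squared_le_sum_of_squares)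
  finally show ?thesis by (simp add: mult.commute)
qed

lemma cmod_sq_Re: "(cmod z)\<^sup>2 = Re (z * cnj z)"
  using arg_cong[OF complex_norm_square[of z], of Re] by simp

lemma I2:
  fixes g :: "nat \<Rightarrow> nat \<Rightarrow> complex"
  assumes v: "\<And>n. n < N \<Longrightarrow> cmod (v n) = 1"
  shows "(\<Sum>k<K. (cmod (\<Sum>n<N. g n k * v n))\<^sup>2) \<le> (\<Sum>a<N. \<Sum>b<N. cmod (\<Sum>k<K. cnj (g a k) * g b k))"
proof -
  have "(\<Sum>k<K. (cmod (\<Sum>n<N. g n k * v n))\<^sup>2) = Re (\<Sum>k<K. (\<Sum>a<N. g a k * v a) * cnj (\<Sum>b<N. g b k * v b))"
    by (simp add: cmod_sq_Re Re_sum)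
  also have "(\<Sum>k<K. (\<Sum>a<N. g a k * v a) * cnj (\<Sum>b<N. g b k * v b)) =
      (\<Sum>k<K. \<Sum>a<N. \<Sum>b<N. (v a * cnj (v b)) * (g a k * cnj (g b k)))"
    by (simp add: sum_product cnj_sum mult_ac)
  also have "\<dots> = (\<Sum>a<N. \<Sum>b<N. (v a * cnj (v b)) * (\<Sum>k<K. g a k * cnj (g b k)))"
    by (simp add: sum_distrib_left sum.swap[of _ "{..<K}"])
  also have "Re \<dots> \<le> cmod \<dots>" by (rule complex_Re_le_cmod)
  also have "\<dots> \<le> (\<Sum>a<N. \<Sum>b<N. cmod ((v a * cnj (v b)) * (\<Sum>k<K. g a k * cnj (g b k))))"
    by (rule order_trans[OF norm_sum sum_mono[OF norm_sum]])
  also have "\<dots> = (\<Sum>a<N. \<Sum>b<N. cmod (\<Sum>k<K. cnj (g a k) * g b k))"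
  proof (intro sum.cong refl)
    fix a b assume "a \<in> {..<N}" "b \<in> {..<N}"
    then have "cmod (v a * cnj (v b)) = 1" using v by (simp add: norm_mult)
    moreover have "cmod (\<Sum>k<K. g a k * cnj (g b k)) = cmod (\<Sum>k<K. cnj (g a k) * g b k)"
    proof -
      have "(\<Sum>k<K. g a k * cnj (g b k)) = cnj (\<Sum>k<K. cnj (g a k) * g b k)"
        by (simp add: cnj_sum mult.commute)
      then show ?thesis by (simp only: complex_mod_cnj)
    qed
    ultimately show "cmod ((v a * cnj (v b)) * (\<Sum>k<K. g a k * cnj (g b k))) = cmod (\<Sum>k<K. cnj (g a k) * g b k)"
      by (simp add: norm_mult)
  qed
  finally show ?thesis .
qed

lemma I3:
  fixes x :: "nat \<Rightarrow> nat \<Rightarrow> real"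
  assumes "X \<le> (\<Sum>a<N. \<Sum>b<N. x a b)" "0 \<le> X"
  shows "X\<^sup>2 \<le> (real N)\<^sup>2 * (\<Sum>a<N. \<Sum>b<N. (x a b)\<^sup>2)"
proof -
  have "X\<^sup>2 \<le> (\<Sum>a<N. \<Sum>b<N. x a b)\<^sup>2" using assms by (intro power_mono) auto
  also have "\<dots> \<le> (\<Sum>a<N. (\<Sum>b<N. x a b)\<^sup>2) * real N"
    using sum_squared_le_sum_of_squares[of "\<lambda>a. \<Sum>b<N. x a b" "{..<N}"] by simp
  also have "\<dots> \<le> (\<Sum>a<N. (\<Sum>b<N. (x a b)\<^sup>2) * real N) * real N"
    using sum_squared_le_sum_of_squares[of "x _" "{..<N}"]
    by (intro mult_right_mono sum_mono) auto
  also have "\<dots> = (real N)\<^sup>2 * (\<Sum>a<N. \<Sum>b<N. (x a b)\<^sup>2)"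
    by (simp add: sum_distrib_right sum_distrib_left power2_eq_square mult_ac)
  finally show ?thesis .
qed

definition tc :: "nat \<Rightarrow> nat \<Rightarrow> nat \<Rightarrow> nat \<times> nat \<times> nat" where
  "tc K m n = (if m < K then (0, n, m) else (1, n, m - K))"
definition rc :: "nat \<Rightarrow> nat \<Rightarrow> nat \<Rightarrow> nat \<times> nat \<times> nat" where
  "rc K m n = (if m < K then (0, n, m) else (2, m - K, n))"

lemma Gt_tc: "Gt K w n m = w (tc K m n)" by (simp add: Gt_def tc_def)
lemma Gr_rc: "Gr K w m n = w (rc K m n)" by (simp add: Gr_def rc_def)

definition vv :: "real \<Rightarrow> real \<Rightarrow> nat \<Rightarrow> real \<Rightarrow> (nat \<Rightarrow> real) \<Rightarrow> nat \<Rightarrow> complex" where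
  "vv d lam N \<theta> \<phi> n = exp (\<i> * complex_of_real (\<phi> n)) * steer d lam N \<theta> n"

lemma vv_norm: "cmod (vv d lam N \<theta> \<phi> n) = 1"
  by (simp add: vv_def steer_def norm_mult norm_exp_i_times)

lemma gain_eq:
  "gain_obj d lam N Mt Mr \<theta> w \<phi> =
    (\<Sum>m<Mt. (cmod (\<Sum>n<N. w (tc (min Mt Mr) m n) * vv d lam N \<theta> \<phi> n))\<^sup>2) *
    (\<Sum>m<Mr. (cmod (\<Sum>n<N. w (rc (min Mt Mr) m n) * vv d lam N \<theta> \<phi> n))\<^sup>2)"
  by (simp add: gain_obj_def Let_def Gt_tc Gr_rc vv_def)

definition Qf :: "nat \<Rightarrow> nat \<Rightarrow> (nat \<times> nat \<times> nat \<Rightarrow> complex) \<Rightarrow> real" where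
  "Qf N K w = (\<Sum>a<N. \<Sum>b<N. (cmod (\<Sum>k<K. cnj (w (0, a, k)) * w (0, b, k)))\<^sup>2)"
definition Pf :: "nat \<Rightarrow> nat \<Rightarrow> (nat \<times> nat \<times> nat \<Rightarrow> complex) \<Rightarrow> real" where
  "Pf N K w = (\<Sum>m<K. \<Sum>n<N. (cmod (w (0, n, m)))\<^sup>2)"
definition Bf :: "nat \<Rightarrow> nat \<Rightarrow> nat \<Rightarrow> (nat \<times> nat \<times> nat \<Rightarrow> complex) \<Rightarrow> real" where
  "Bf N K Mt w = (\<Sum>m\<in>{K..<Mt}. \<Sum>n<N. (cmod (w (1, n, m - K)))\<^sup>2)"
definition Cf :: "nat \<Rightarrow> nat \<Rightarrow> nat \<Rightarrow> (nat \<times> nat \<times> nat \<Rightarrow> complex) \<Rightarrow> real" where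
  "Cf N K Mr w = (\<Sum>m\<in>{K..<Mr}. \<Sum>n<N. (cmod (w (2, m - K, n)))\<^sup>2)"
definition Uf :: "nat \<Rightarrow> nat \<Rightarrow> nat \<Rightarrow> (nat \<times> nat \<times> nat \<Rightarrow> complex) \<Rightarrow> real" where
  "Uf N Mt Mr w = (real N)\<^sup>2 * Qf N (min Mt Mr) w +
     (real N)\<^sup>2 * (Pf N (min Mt Mr) w * (Bf N (min Mt Mr) Mt w + Cf N (min Mt Mr) Mr w))"

lemma sum_split_K:
  fixes K M :: nat
  assumes "K \<le> M"
  shows "(\<Sum>m<M. f m) = (\<Sum>m<K. f m) + (\<Sum>m\<in>{K..<M}. f m)"
proof -
  have "{..<M} = {..<K} \<union> {K..<M}" using ivl_disj_un_one(2)[OF assms] by auto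
  then show ?thesis by (simp add: sum.union_disjoint[symmetric] ivl_disj_int_one(2))
qed

lemma sumI1:
  assumes v: "\<And>n. n < N \<Longrightarrow> cmod (v n) = 1"
  shows "(\<Sum>m\<in>S. (cmod (\<Sum>n<N. c m n * v n))\<^sup>2) \<le> real N * (\<Sum>m\<in>S. \<Sum>n<N. (cmod (c m n))\<^sup>2)"
proof -
  have "(\<Sum>m\<in>S. (cmod (\<Sum>n<N. c m n * v n))\<^sup>2) \<le> (\<Sum>m\<in>S. real N * (\<Sum>n<N. (cmod (c m n))\<^sup>2))"
    by (rule sum_mono) (rule I1[OF v])
  also have "\<dots> = real N * (\<Sum>m\<in>S. \<Sum>n<N. (cmod (c m n))\<^sup>2)"
    by (rule sum_distrib_left[symmetric])
  finally show ?thesis .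
qed

lemma gain_le_U: "gain_obj d lam N Mt Mr \<theta> w \<phi> \<le> Uf N Mt Mr w"
proof -
  define K where "K = min Mt Mr"
  define v where "v = vv d lam N \<theta> \<phi>"
  have hK: "K \<le> Mt" "K \<le> Mr" by (auto simp: K_def)
  have v1: "\<And>n. n < N \<Longrightarrow> cmod (v n) = 1" by (simp add: v_def vv_norm)
  define X where "X = (\<Sum>m<K. (cmod (\<Sum>n<N. w (0, n, m) * v n))\<^sup>2)"
  define Y where "Y = (\<Sum>m\<in>{K..<Mt}. (cmod (\<Sum>n<N. w (1, n, m - K) * v n))\<^sup>2)"
  define Z where "Z = (\<Sum>m\<in>{K..<Mr}. (cmod (\<Sum>n<N. w (2, m - K, n) * v n))\<^sup>2)"
  have ST: "(\<Sum>m<Mt. (cmod (\<Sum>n<N. w (tc K m n) * v n))\<^sup>2) = X + Y"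
    unfolding X_def Y_def by (subst sum_split_K[OF hK(1)]) (auto simp: tc_def intro!: sum.cong)
  have SR: "(\<Sum>m<Mr. (cmod (\<Sum>n<N. w (rc K m n) * v n))\<^sup>2) = X + Z"
    unfolding X_def Z_def by (subst sum_split_K[OF hK(2)]) (auto simp: rc_def intro!: sum.cong)
  have X0: "0 \<le> X" "0 \<le> Y" "0 \<le> Z" unfolding X_def Y_def Z_def by (auto intro!: sum_nonneg)
  have hX: "X \<le> real N * Pf N K w"
    unfolding X_def Pf_def by (rule sumI1[OF v1])
  have hY: "Y \<le> real N * Bf N K Mt w"
    unfolding Y_def Bf_def by (rule sumI1[OF v1])
  have hZ: "Z \<le> real N * Cf N K Mr w"
    unfolding Z_def Cf_def by (rule sumI1[OF v1])
  have hX2: "X\<^sup>2 \<le> (real N)\<^sup>2 * Qf N K w"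
  proof -
    have "X \<le> (\<Sum>a<N. \<Sum>b<N. cmod (\<Sum>k<K. cnj (w (0, a, k)) * w (0, b, k)))"
      unfolding X_def by (rule I2[OF v1])
    from I3[OF this X0(1)] show ?thesis by (simp add: Qf_def)
  qed
  have YZ: "Y * Z = 0"
  proof (cases "K = Mt")
    case True then show ?thesis by (simp add: Y_def)
  next
    case False then have "K = Mr" by (simp add: K_def min_def split: if_splits)
    then show ?thesis by (simp add: Z_def)
  qed
  have P0: "0 \<le> Pf N K w" "0 \<le> Bf N K Mt w" "0 \<le> Cf N K Mr w"
    unfolding Pf_def Bf_def Cf_def by (auto intro!: sum_nonneg)
  have "X * (Y + Z) \<le> (real N * Pf N K w) * (real N * Bf N K Mt w + real N * Cf N K Mr w)"
    using hX hY hZ X0 by (intro mult_mono add_mono) auto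
  moreover have "(real N * Pf N K w) * (real N * Bf N K Mt w + real N * Cf N K Mr w) = (real N)\<^sup>2 * (Pf N K w * (Bf N K Mt w + Cf N K Mr w))"
    by (simp add: algebra_simps power2_eq_square)
  moreover have "(X + Y) * (X + Z) = X\<^sup>2 + X * (Y + Z) + Y * Z"
    by (simp add: algebra_simps power2_eq_square)
  ultimately have "(X + Y) * (X + Z) \<le> (real N)\<^sup>2 * Qf N K w + (real N)\<^sup>2 * (Pf N K w * (Bf N K Mt w + Cf N K Mr w))"
    using hX2 YZ by linarith
  then show ?thesis
    unfolding gain_eq Uf_def K_def[symmetric] v_def[symmetric] ST SR .
qed

lemma PM_space1: "emeasure (PM I) (space (PM I)) = 1"
  using PM_prob prob_space.emeasure_space_1 by blast

lemma nn_const_PM: "(\<integral>\<^sup>+w. c \<partial>PM I) = c"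
  by (simp add: nn_integral_const PM_space1)

lemma nn_sum:
  assumes "finite S" and "\<And>i. i \<in> S \<Longrightarrow> (\<lambda>w. f i w) \<in> borel_measurable M"
    and "\<And>i w. i \<in> S \<Longrightarrow> 0 \<le> f i w"
  shows "(\<integral>\<^sup>+w. ennreal (\<Sum>i\<in>S. f i w) \<partial>M) = (\<Sum>i\<in>S. \<integral>\<^sup>+w. ennreal (f i w) \<partial>M)"
proof -
  have "(\<integral>\<^sup>+w. ennreal (\<Sum>i\<in>S. f i w) \<partial>M) = (\<integral>\<^sup>+w. (\<Sum>i\<in>S. ennreal (f i w)) \<partial>M)"
    using assms(3) by (intro nn_integral_cong) simp
  also have "\<dots> = (\<Sum>i\<in>S. \<integral>\<^sup>+w. ennreal (f i w) \<partial>M)"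
    using assms(1,2) by (intro nn_integral_sum) auto
  finally show ?thesis .
qed

lemma lemE2:
  fixes h :: "('i \<Rightarrow> complex) \<Rightarrow> real"
  assumes fin: "finite I" and i: "i \<in> I"
    and hm: "h \<in> borel_measurable (PM I)" and h0: "\<And>w. 0 \<le> h w"
    and dep: "\<And>w w'. (\<And>j. j \<noteq> i \<Longrightarrow> w j = w' j) \<Longrightarrow> h w = h w'"
  shows "(\<integral>\<^sup>+w. ennreal (h w * (cmod (w i))\<^sup>2) \<partial>PM I) = (\<integral>\<^sup>+w. ennreal (h w) \<partial>PM I)"
proof -
  have "(\<integral>\<^sup>+w. ennreal (h w * (cmod (w i))\<^sup>2) \<partial>PM I) = (\<integral>\<^sup>+w. ennreal (h w) * ennreal ((cmod (w i))\<^sup>2) \<partial>PM I)"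
    using h0 by (intro nn_integral_cong) (simp add: ennreal_mult)
  also have "\<dots> = (\<integral>\<^sup>+w. ennreal (h w) \<partial>PM I) * (\<integral>\<^sup>+z. ennreal ((cmod z)\<^sup>2) \<partial>cgauss)"
  proof (rule lemE[OF fin i])
    show "(\<lambda>w. ennreal (h w)) \<in> borel_measurable (PM I)" using hm by measurable
    show "(\<lambda>z. ennreal ((cmod z)\<^sup>2)) \<in> borel_measurable borel" by measurable
  next
    fix w w' :: "'i \<Rightarrow> complex" assume "\<And>j. j \<noteq> i \<Longrightarrow> w j = w' j"
    then have "h w = h w'" by (rule dep)
    then show "ennreal (h w) = ennreal (h w')" by simp
  qed
  finally show ?thesis by (simp add: cg_abs2)
qed

lemma E1:
  assumes "finite I" "i \<in> I"
  shows "(\<integral>\<^sup>+w. ennreal ((cmod (w i))\<^sup>2) \<partial>PM I) = 1"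
  using lemE2[OF assms, of "\<lambda>_. 1"] by (simp add: nn_const_PM PM_space1)

lemma E4:
  assumes fin: "finite I" and i: "i \<in> I"
  shows "(\<integral>\<^sup>+w. ennreal ((cmod (w i))\<^sup>2 * (cmod (w i))\<^sup>2) \<partial>PM I) = 2"
proof -
  have "(\<integral>\<^sup>+w. ennreal ((cmod (w i))\<^sup>2 * (cmod (w i))\<^sup>2) \<partial>PM I) = (\<integral>\<^sup>+w. 1 * ennreal ((cmod (w i))^4) \<partial>PM I)"
    by (intro nn_integral_cong) (simp add: power2_eq_square power4_eq_xxxx mult_ac)
  also have "\<dots> = (\<integral>\<^sup>+w. 1 \<partial>PM I) * (\<integral>\<^sup>+z. ennreal ((cmod z)^4) \<partial>cgauss)"
    by (rule lemE[OF fin i]) simp_all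
  finally show ?thesis by (simp add: cg_abs4 nn_const_PM PM_space1)
qed

lemma E11:
  assumes fin: "finite I" and ij: "i \<in> I" "j \<in> I" "i \<noteq> j"
  shows "(\<integral>\<^sup>+w. ennreal ((cmod (w j))\<^sup>2 * (cmod (w i))\<^sup>2) \<partial>PM I) = 1"
proof -
  note meas_coord[measurable]
  have "(\<integral>\<^sup>+w. ennreal ((cmod (w j))\<^sup>2 * (cmod (w i))\<^sup>2) \<partial>PM I) = (\<integral>\<^sup>+w. ennreal ((cmod (w j))\<^sup>2) \<partial>PM I)"
  proof (rule lemE2[OF fin ij(1)])
    show "(\<lambda>w. (cmod (w j))\<^sup>2) \<in> borel_measurable (PM I)" by measurable
  next
    fix w w' :: "'a \<Rightarrow> complex" assume "\<And>j'. j' \<noteq> i \<Longrightarrow> w j' = w' j'"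
    then have "w j = w' j" using ij(3) by metis
    then show "(cmod (w j))\<^sup>2 = (cmod (w' j))\<^sup>2" by simp
  qed simp
  then show ?thesis using E1[OF fin ij(2)] by simp
qed

lemma Eabs:
  assumes fin: "finite I" and ij: "i \<in> I" "j \<in> I" "i \<noteq> j"
  shows "(\<integral>\<^sup>+w. ennreal (cmod (w j) * cmod (w i)) \<partial>PM I) = ennreal (pi / 4)"
proof -
  note meas_coord[measurable]
  have "(\<integral>\<^sup>+w. ennreal (cmod (w j) * cmod (w i)) \<partial>PM I) = (\<integral>\<^sup>+w. ennreal (cmod (w j)) * ennreal (cmod (w i)) \<partial>PM I)"
    by (intro nn_integral_cong) (simp add: ennreal_mult)
  also have "\<dots> = (\<integral>\<^sup>+w. ennreal (cmod (w j)) \<partial>PM I) * (\<integral>\<^sup>+z. ennreal (cmod z) \<partial>cgauss)"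
  proof (rule lemE[OF fin ij(1)])
    show "(\<lambda>w. ennreal (cmod (w j))) \<in> borel_measurable (PM I)" by measurable
  next
    fix w w' :: "'a \<Rightarrow> complex" assume "\<And>j'. j' \<noteq> i \<Longrightarrow> w j' = w' j'"
    then have "w j = w' j" using ij(3) by metis
    then show "ennreal (cmod (w j)) = ennreal (cmod (w' j))" by simp
  qed simp
  also have "(\<integral>\<^sup>+w. ennreal (cmod (w j)) \<partial>PM I) = (\<integral>\<^sup>+w. 1 * ennreal (cmod (w j)) \<partial>PM I)" by simp
  also have "\<dots> = (\<integral>\<^sup>+w. 1 \<partial>PM I) * (\<integral>\<^sup>+z. ennreal (cmod z) \<partial>cgauss)"
    by (rule lemE[OF fin ij(2)]) simp_all
  finally have "(\<integral>\<^sup>+w. ennreal (cmod (w j) * cmod (w i)) \<partial>PM I) = ennreal (sqrt pi / 2) * ennreal (sqrt pi / 2)"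
    by (simp add: cg_abs1 nn_const_PM PM_space1)
  also have "\<dots> = ennreal (pi / 4)"
    by (simp add: ennreal_mult[symmetric])
  finally show ?thesis .
qed

lemma E1abs:
  assumes fin: "finite I" and i: "i \<in> I"
  shows "(\<integral>\<^sup>+w. ennreal (cmod (w i) * cmod (w i)) \<partial>PM I) = 1"
  using E1[OF assms] by (simp add: power2_eq_square)

lemma borel_measurable_cnj[measurable]:
  assumes [measurable]: "f \<in> borel_measurable M"
  shows "(\<lambda>x. cnj (f x)) \<in> borel_measurable M"
proof -
  have "(\<lambda>x. cnj (f x)) = (\<lambda>x. complex_of_real (Re (f x)) - \<i> * complex_of_real (Im (f x)))"
    by (auto simp: complex_eq_iff)
  then show ?thesis by simp
qed

lemma fin_chan: "finite (chan_index N Mt Mr)"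
  by (simp add: chan_index_def)

lemma mem_chan: "(a, b, c) \<in> chan_index N Mt Mr \<longleftrightarrow>
   (a = 0 \<and> b < N \<and> c < min Mt Mr) \<or> (a = 1 \<and> b < N \<and> c < Mt - min Mt Mr) \<or> (a = 2 \<and> b < Mr - min Mt Mr \<and> c < N)"
  by (auto simp: chan_index_def)

lemma sum_if_eq:
  fixes a b :: real
  assumes "finite S" "k \<in> S"
  shows "(\<Sum>l\<in>S. if k = l then a else b) = a + (real (card S) - 1) * b"
proof -
  have "(\<Sum>l\<in>S. if k = l then a else b) = (\<Sum>l\<in>S. b + (if k = l then a - b else 0))"
    by (intro sum.cong) auto
  also have "\<dots> = real (card S) * b + (a - b)"
    using assms by (simp add: sum.distrib)
  finally show ?thesis by (simp add: algebra_simps)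
qed

context
  fixes N Mt Mr :: nat
begin

abbreviation "KK \<equiv> min Mt Mr"
abbreviation "II \<equiv> chan_index N Mt Mr"

lemma intQ_off:
  assumes ab: "a < N" "b < N" "a \<noteq> b"
  shows "(\<integral>\<^sup>+w. ennreal ((cmod (\<Sum>k<KK. cnj (w (0, a, k)) * w (0, b, k)))\<^sup>2) \<partial>PM II) = ennreal (real KK)"
proof -
  note meas_coord[measurable]
  have "(\<integral>\<^sup>+w. (\<lambda>_. 1) w * ennreal ((cmod (\<Sum>k<KK. (\<lambda>k w. cnj (w (0, a, k))) k w * w ((\<lambda>k. (0, b, k)) k)))\<^sup>2) \<partial>PM II) =
        (\<integral>\<^sup>+w. (\<lambda>_. 1) w * ennreal (\<Sum>k<KK. (cmod ((\<lambda>k w. cnj (w (0, a, k))) k w))\<^sup>2) \<partial>PM II)"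
  proof (rule lemC[OF fin_chan])
    show "inj_on (\<lambda>k. (0::nat, b, k)) {..<KK}" by (auto simp: inj_on_def)
    show "(\<lambda>k. (0::nat, b, k)) ` {..<KK} \<subseteq> II" using ab by (auto simp: mem_chan)
    show "(\<lambda>_. 1) \<in> borel_measurable (PM II)" by simp
    show "(\<lambda>w. cnj (w (0, a, k))) \<in> borel_measurable (PM II)" for k by measurable
  next
    fix w w' :: "nat \<times> nat \<times> nat \<Rightarrow> complex"
    assume eq: "\<And>j. j \<notin> (\<lambda>k. (0, b, k)) ` {..<KK} \<Longrightarrow> w j = w' j"
    show "(\<lambda>_. 1) w = (\<lambda>_. 1) w' \<and> (\<forall>k<KK. cnj (w (0, a, k)) = cnj (w' (0, a, k)))"
      using eq ab(3) by auto
  qed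
  also have "\<dots> = (\<integral>\<^sup>+w. ennreal (\<Sum>k<KK. (cmod (w (0, a, k)))\<^sup>2) \<partial>PM II)" by simp
  also have "\<dots> = (\<Sum>k<KK. \<integral>\<^sup>+w. ennreal ((cmod (w (0, a, k)))\<^sup>2) \<partial>PM II)"
    by (rule nn_sum) auto
  also have "\<dots> = (\<Sum>k<KK. 1)"
    using ab by (intro sum.cong refl E1[OF fin_chan]) (auto simp: mem_chan)
  finally show ?thesis by (simp add: ennreal_of_nat_eq_real_of_nat)
qed

lemma intQ_diag:
  assumes a: "a < N"
  shows "(\<integral>\<^sup>+w. ennreal ((cmod (\<Sum>k<KK. cnj (w (0, a, k)) * w (0, a, k)))\<^sup>2) \<partial>PM II) = ennreal (real KK * (real KK + 1))"
proof -
  note meas_coord[measurable]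
  have pt: "(cmod (\<Sum>k<KK. cnj (w (0, a, k)) * w (0, a, k)))\<^sup>2 = (\<Sum>k<KK. \<Sum>l<KK. (cmod (w (0, a, k)))\<^sup>2 * (cmod (w (0, a, l)))\<^sup>2)" for w :: "nat \<times> nat \<times> nat \<Rightarrow> complex"
  proof -
    have e: "\<And>z. cnj z * z = complex_of_real ((cmod z)\<^sup>2)"
      by (metis complex_norm_square mult.commute)
    have "(\<Sum>k<KK. cnj (w (0, a, k)) * w (0, a, k)) = (\<Sum>k<KK. complex_of_real ((cmod (w (0, a, k)))\<^sup>2))"
      by (simp only: e)
    also have "\<dots> = complex_of_real (\<Sum>k<KK. (cmod (w (0, a, k)))\<^sup>2)"
      by (simp only: of_real_sum)
    finally have "(\<Sum>k<KK. cnj (w (0, a, k)) * w (0, a, k)) = complex_of_real (\<Sum>k<KK. (cmod (w (0, a, k)))\<^sup>2)" .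
    then have "cmod (\<Sum>k<KK. cnj (w (0, a, k)) * w (0, a, k)) = cmod (complex_of_real (\<Sum>k<KK. (cmod (w (0, a, k)))\<^sup>2))"
      by (simp only:)
    also have "\<dots> = (\<Sum>k<KK. (cmod (w (0, a, k)))\<^sup>2)"
      by (simp only: norm_of_real abs_of_nonneg[OF sum_nonneg[OF zero_le_power2]])
    finally have "cmod (\<Sum>k<KK. cnj (w (0, a, k)) * w (0, a, k)) = (\<Sum>k<KK. (cmod (w (0, a, k)))\<^sup>2)" .
    then show ?thesis by (simp add: power2_eq_square sum_product)
  qed
  have "(\<integral>\<^sup>+w. ennreal ((cmod (\<Sum>k<KK. cnj (w (0, a, k)) * w (0, a, k)))\<^sup>2) \<partial>PM II) =
      (\<integral>\<^sup>+w. ennreal (\<Sum>k<KK. \<Sum>l<KK. (cmod (w (0, a, k)))\<^sup>2 * (cmod (w (0, a, l)))\<^sup>2) \<partial>PM II)"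
    by (simp only: pt)
  also have "\<dots> = (\<Sum>k<KK. \<integral>\<^sup>+w. ennreal (\<Sum>l<KK. (cmod (w (0, a, k)))\<^sup>2 * (cmod (w (0, a, l)))\<^sup>2) \<partial>PM II)"
    by (rule nn_sum) (auto intro!: sum_nonneg)
  also have "\<dots> = (\<Sum>k<KK. \<Sum>l<KK. \<integral>\<^sup>+w. ennreal ((cmod (w (0, a, k)))\<^sup>2 * (cmod (w (0, a, l)))\<^sup>2) \<partial>PM II)"
    by (intro sum.cong refl nn_sum) auto
  also have "\<dots> = (\<Sum>k<KK. \<Sum>l<KK. ennreal (if k = l then 2 else 1))"
  proof (intro sum.cong refl)
    fix k l assume kl: "k \<in> {..<KK}" "l \<in> {..<KK}"
    show "(\<integral>\<^sup>+w. ennreal ((cmod (w (0, a, k)))\<^sup>2 * (cmod (w (0, a, l)))\<^sup>2) \<partial>PM II) = ennreal (if k = l then 2 else 1)"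
    proof (cases "k = l")
      case True then show ?thesis using kl a E4[OF fin_chan, of "(0, a, l)" N Mt Mr] by (simp add: mem_chan)
    next
      case False then show ?thesis using kl a E11[OF fin_chan, of "(0, a, l)" N Mt Mr "(0, a, k)"] by (simp add: mem_chan)
    qed
  qed
  also have "\<dots> = ennreal (\<Sum>k<KK. \<Sum>l<KK. if k = l then 2 else 1)"
    by (simp add: sum_nonneg)
  also have "(\<Sum>k<KK. \<Sum>l<KK. if k = l then 2 else (1::real)) = (\<Sum>k<KK. 2 + (real KK - 1) * 1)"
  proof (intro sum.cong refl)
    fix k assume "k \<in> {..<KK}"
    then show "(\<Sum>l<KK. if k = l then 2 else (1::real)) = 2 + (real KK - 1) * 1"
      using sum_if_eq[of "{..<KK}" k 2 1] by simp
  qed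
  also have "\<dots> = real KK * (real KK + 1)" by (simp add: algebra_simps)
  finally show ?thesis .
qed


lemma intQ: "(\<integral>\<^sup>+w. ennreal (Qf N KK w) \<partial>PM II) = ennreal (real N * (real KK * (real KK + 1) + (real N - 1) * real KK))"
proof -
  note meas_coord[measurable]
  have "(\<integral>\<^sup>+w. ennreal (Qf N KK w) \<partial>PM II) =
      (\<Sum>a<N. \<integral>\<^sup>+w. ennreal (\<Sum>b<N. (cmod (\<Sum>k<KK. cnj (w (0, a, k)) * w (0, b, k)))\<^sup>2) \<partial>PM II)"
    unfolding Qf_def by (rule nn_sum) (auto intro!: sum_nonneg)
  also have "\<dots> = (\<Sum>a<N. \<Sum>b<N. \<integral>\<^sup>+w. ennreal ((cmod (\<Sum>k<KK. cnj (w (0, a, k)) * w (0, b, k)))\<^sup>2) \<partial>PM II)"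
    by (intro sum.cong refl nn_sum) auto
  also have "\<dots> = (\<Sum>a<N. \<Sum>b<N. ennreal (if a = b then real KK * (real KK + 1) else real KK))"
  proof (intro sum.cong refl)
    fix a b assume "a \<in> {..<N}" "b \<in> {..<N}"
    then show "(\<integral>\<^sup>+w. ennreal ((cmod (\<Sum>k<KK. cnj (w (0, a, k)) * w (0, b, k)))\<^sup>2) \<partial>PM II) =
       ennreal (if a = b then real KK * (real KK + 1) else real KK)"
      using intQ_diag[of a] intQ_off[of a b] by auto
  qed
  also have "\<dots> = ennreal (\<Sum>a<N. \<Sum>b<N. if a = b then real KK * (real KK + 1) else real KK)"
    by (simp add: sum_nonneg)
  also have "(\<Sum>a<N. \<Sum>b<N. if a = b then real KK * (real KK + 1) else real KK) =
      (\<Sum>a<N. real KK * (real KK + 1) + (real N - 1) * real KK)"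
  proof (intro sum.cong refl)
    fix a assume "a \<in> {..<N}"
    then show "(\<Sum>b<N. if a = b then real KK * (real KK + 1) else real KK) = real KK * (real KK + 1) + (real N - 1) * real KK"
      using sum_if_eq[of "{..<N}" a "real KK * (real KK + 1)" "real KK"] by simp
  qed
  finally show ?thesis by simp
qed

lemma intP: "(\<integral>\<^sup>+w. ennreal (Pf N KK w) \<partial>PM II) = ennreal (real KK * real N)"
proof -
  note meas_coord[measurable]
  have "(\<integral>\<^sup>+w. ennreal (Pf N KK w) \<partial>PM II) = (\<Sum>m<KK. \<integral>\<^sup>+w. ennreal (\<Sum>n<N. (cmod (w (0, n, m)))\<^sup>2) \<partial>PM II)"
    unfolding Pf_def by (rule nn_sum) (auto intro!: sum_nonneg)
  also have "\<dots> = (\<Sum>m<KK. \<Sum>n<N. \<integral>\<^sup>+w. ennreal ((cmod (w (0, n, m)))\<^sup>2) \<partial>PM II)"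
    by (intro sum.cong refl nn_sum) auto
  also have "\<dots> = (\<Sum>m<KK. \<Sum>n<N. 1)"
    by (intro sum.cong refl E1[OF fin_chan]) (auto simp: mem_chan)
  also have "\<dots> = ennreal (real KK * real N)"
    by (simp add: ennreal_of_nat_eq_real_of_nat ennreal_mult[symmetric])
  finally show ?thesis .
qed

lemma Pf_dep:
  assumes "\<And>j. j \<noteq> (c, n, m) \<Longrightarrow> w j = w' j" "c \<noteq> 0"
  shows "Pf N KK w = Pf N KK w'"
  unfolding Pf_def using assms by (auto intro!: sum.cong)

lemma intPX:
  assumes c: "c \<noteq> 0" and mem: "\<And>m n. m \<in> S \<Longrightarrow> n < N \<Longrightarrow> \<kappa> m n \<in> II" and fS: "finite S"
    and kc: "\<And>m n. fst (\<kappa> m n) = c"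
  shows "(\<integral>\<^sup>+w. ennreal (Pf N KK w * (\<Sum>m\<in>S. \<Sum>n<N. (cmod (w (\<kappa> m n)))\<^sup>2)) \<partial>PM II) =
     ennreal (real KK * real N * (real (card S) * real N))"
proof -
  note meas_coord[measurable]
  have mP[measurable]: "(\<lambda>w. Pf N KK w) \<in> borel_measurable (PM II)" unfolding Pf_def by measurable
  have P0: "0 \<le> Pf N KK w" for w unfolding Pf_def by (auto intro!: sum_nonneg)
  have "(\<integral>\<^sup>+w. ennreal (Pf N KK w * (\<Sum>m\<in>S. \<Sum>n<N. (cmod (w (\<kappa> m n)))\<^sup>2)) \<partial>PM II) =
      (\<integral>\<^sup>+w. ennreal (\<Sum>m\<in>S. \<Sum>n<N. Pf N KK w * (cmod (w (\<kappa> m n)))\<^sup>2) \<partial>PM II)"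
    by (simp add: sum_distrib_left)
  also have "\<dots> = (\<Sum>m\<in>S. \<integral>\<^sup>+w. ennreal (\<Sum>n<N. Pf N KK w * (cmod (w (\<kappa> m n)))\<^sup>2) \<partial>PM II)"
    by (rule nn_sum[OF fS]) (auto intro!: sum_nonneg simp: P0)
  also have "\<dots> = (\<Sum>m\<in>S. \<Sum>n<N. \<integral>\<^sup>+w. ennreal (Pf N KK w * (cmod (w (\<kappa> m n)))\<^sup>2) \<partial>PM II)"
    by (intro sum.cong refl nn_sum) (auto simp: P0)
  also have "\<dots> = (\<Sum>m\<in>S. \<Sum>n<N. ennreal (real KK * real N))"
  proof (intro sum.cong refl)
    fix m n assume mn: "m \<in> S" "n \<in> {..<N}"
    have "(\<integral>\<^sup>+w. ennreal (Pf N KK w * (cmod (w (\<kappa> m n)))\<^sup>2) \<partial>PM II) = (\<integral>\<^sup>+w. ennreal (Pf N KK w) \<partial>PM II)"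
    proof (rule lemE2[OF fin_chan])
      show "\<kappa> m n \<in> II" using mn mem by auto
      show "(\<lambda>w. Pf N KK w) \<in> borel_measurable (PM II)" by (rule mP)
      show "0 \<le> Pf N KK w" for w by (rule P0)
    next
      fix w w' :: "nat \<times> nat \<times> nat \<Rightarrow> complex"
      assume eq: "\<And>j. j \<noteq> \<kappa> m n \<Longrightarrow> w j = w' j"
      obtain a b where "\<kappa> m n = (c, a, b)" using kc[of m n] by (cases "\<kappa> m n") auto
      then show "Pf N KK w = Pf N KK w'" using Pf_dep[of c a b w w'] eq c by auto
    qed
    then show "(\<integral>\<^sup>+w. ennreal (Pf N KK w * (cmod (w (\<kappa> m n)))\<^sup>2) \<partial>PM II) = ennreal (real KK * real N)"
      by (simp add: intP)
  qed
  also have "\<dots> = ennreal (real KK * real N * (real (card S) * real N))"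
    by (simp add: ennreal_of_nat_eq_real_of_nat ennreal_mult[symmetric] algebra_simps)
  finally show ?thesis .
qed


lemma intU: "(\<integral>\<^sup>+w. ennreal (Uf N Mt Mr w) \<partial>PM II) =
   ennreal ((real N)\<^sup>2 * (real N * (real KK * (real KK + 1) + (real N - 1) * real KK)) +
            (real N)\<^sup>2 * (real KK * real N * (real (Mt - KK) * real N)) +
            (real N)\<^sup>2 * (real KK * real N * (real (Mr - KK) * real N)))"
proof -
  note meas_coord[measurable]
  have P0: "0 \<le> Pf N KK w" "0 \<le> Bf N KK Mt w" "0 \<le> Cf N KK Mr w" "0 \<le> Qf N KK w" for w
    unfolding Pf_def Bf_def Cf_def Qf_def by (auto intro!: sum_nonneg)
  have mQ[measurable]: "(\<lambda>w. Qf N KK w) \<in> borel_measurable (PM II)" unfolding Qf_def by measurable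
  have mPB[measurable]: "(\<lambda>w. Pf N KK w * Bf N KK Mt w) \<in> borel_measurable (PM II)" unfolding Pf_def Bf_def by measurable
  have mPC[measurable]: "(\<lambda>w. Pf N KK w * Cf N KK Mr w) \<in> borel_measurable (PM II)" unfolding Pf_def Cf_def by measurable
  have "(\<integral>\<^sup>+w. ennreal (Uf N Mt Mr w) \<partial>PM II) =
     (\<integral>\<^sup>+w. ennreal ((real N)\<^sup>2) * ennreal (Qf N KK w) + (ennreal ((real N)\<^sup>2) * ennreal (Pf N KK w * Bf N KK Mt w) +
                ennreal ((real N)\<^sup>2) * ennreal (Pf N KK w * Cf N KK Mr w)) \<partial>PM II)"
    by (intro nn_integral_cong) (simp add: Uf_def P0 distrib_left ennreal_mult[symmetric] ennreal_plus[symmetric] del: ennreal_plus)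
  also have "\<dots> = ennreal ((real N)\<^sup>2) * (\<integral>\<^sup>+w. ennreal (Qf N KK w) \<partial>PM II) +
      (ennreal ((real N)\<^sup>2) * (\<integral>\<^sup>+w. ennreal (Pf N KK w * Bf N KK Mt w) \<partial>PM II) +
       ennreal ((real N)\<^sup>2) * (\<integral>\<^sup>+w. ennreal (Pf N KK w * Cf N KK Mr w) \<partial>PM II))"
    by (simp add: nn_integral_add nn_integral_cmult)
  also have "(\<integral>\<^sup>+w. ennreal (Pf N KK w * Bf N KK Mt w) \<partial>PM II) = ennreal (real KK * real N * (real (Mt - KK) * real N))"
    unfolding Bf_def by (subst intPX[of 1]) (auto simp: mem_chan)
  also have "(\<integral>\<^sup>+w. ennreal (Pf N KK w * Cf N KK Mr w) \<partial>PM II) = ennreal (real KK * real N * (real (Mr - KK) * real N))"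
    unfolding Cf_def by (subst intPX[of 2]) (auto simp: mem_chan)
  moreover have QV0: "0 \<le> real N * (real KK * (real KK + 1) + (real N - 1) * real KK)"
    by (cases N) auto
  ultimately show ?thesis
    by (simp add: intQ QV0 ennreal_mult[symmetric] ennreal_plus[symmetric] del: ennreal_plus)
qed

end

lemma gamma_le_U: "gamma1_star d lam N Mt Mr \<theta> w \<le> Uf N Mt Mr w"
  unfolding gamma1_star_def by (rule cSUP_least) (auto intro: gain_le_U)

lemma upper_arith:
  fixes n k a b :: real
  assumes n: "2 \<le> n" and k: "1 \<le> k" and ka: "k \<le> a" "k \<le> b" and kmin: "k = a \<or> k = b"
  shows "n\<^sup>2 * (n * (k * (k + 1) + (n - 1) * k)) + n\<^sup>2 * (k * n * ((a - k) * n)) + n\<^sup>2 * (k * n * ((b - k) * n))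
     \<le> n\<^sup>2 * ((a + b + (1 - 3 * k) / 2) * k * n\<^sup>2 + 2 * k * n)"
proof -
  have "n\<^sup>2 * ((a + b + (1 - 3 * k) / 2) * k * n\<^sup>2 + 2 * k * n) -
      (n\<^sup>2 * (n * (k * (k + 1) + (n - 1) * k)) + n\<^sup>2 * (k * n * ((a - k) * n)) + n\<^sup>2 * (k * n * ((b - k) * n)))
     = n^3 * k * ((k - 1) * (n / 2 - 1) + 1)"
    by (simp add: field_simps power2_eq_square power3_eq_cube)
  moreover have "0 \<le> n^3 * k * ((k - 1) * (n / 2 - 1) + 1)"
    using n k by (intro mult_nonneg_nonneg) auto
  ultimately show ?thesis by linarith
qed

lemma upper:
  assumes N: "N > 0" "even N" and M: "Mt > 0" "Mr > 0"
  shows "(\<integral>\<^sup>+ w. ennreal (gamma1_star d lam N Mt Mr \<theta> w) \<partial>chan_space N Mt Mr)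
           \<le> ennreal ((real N)\<^sup>2 * ((real Mt + real Mr + (1 - 3 * real (min Mt Mr)) / 2)
                             * real (min Mt Mr) * (real N)\<^sup>2 + 2 * real (min Mt Mr) * real N))"
proof -
  have "(\<integral>\<^sup>+ w. ennreal (gamma1_star d lam N Mt Mr \<theta> w) \<partial>chan_space N Mt Mr) \<le>
        (\<integral>\<^sup>+ w. ennreal (Uf N Mt Mr w) \<partial>chan_space N Mt Mr)"
    by (intro nn_integral_mono ennreal_leI gamma_le_U)
  also have "\<dots> = ennreal ((real N)\<^sup>2 * (real N * (real (min Mt Mr) * (real (min Mt Mr) + 1) + (real N - 1) * real (min Mt Mr))) +
            (real N)\<^sup>2 * (real (min Mt Mr) * real N * (real (Mt - min Mt Mr) * real N)) +
            (real N)\<^sup>2 * (real (min Mt Mr) * real N * (real (Mr - min Mt Mr) * real N)))"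
    unfolding chan_space_def by (rule intU)
  also have "\<dots> \<le> ennreal ((real N)\<^sup>2 * ((real Mt + real Mr + (1 - 3 * real (min Mt Mr)) / 2)
                             * real (min Mt Mr) * (real N)\<^sup>2 + 2 * real (min Mt Mr) * real N))"
  proof (rule ennreal_leI)
    have n2: "2 \<le> real N" using N by (auto elim!: evenE)
    have k1: "1 \<le> real (min Mt Mr)" using M by auto
    have e1: "real (Mt - min Mt Mr) = real Mt - real (min Mt Mr)" by (simp add: of_nat_diff)
    have e2: "real (Mr - min Mt Mr) = real Mr - real (min Mt Mr)" by (simp add: of_nat_diff)
    show "(real N)\<^sup>2 * (real N * (real (min Mt Mr) * (real (min Mt Mr) + 1) + (real N - 1) * real (min Mt Mr))) +
            (real N)\<^sup>2 * (real (min Mt Mr) * real N * (real (Mt - min Mt Mr) * real N)) +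
            (real N)\<^sup>2 * (real (min Mt Mr) * real N * (real (Mr - min Mt Mr) * real N))
        \<le> (real N)\<^sup>2 * ((real Mt + real Mr + (1 - 3 * real (min Mt Mr)) / 2)
                             * real (min Mt Mr) * (real N)\<^sup>2 + 2 * real (min Mt Mr) * real N)"
      unfolding e1 e2
      by (rule upper_arith[OF n2 k1]) (auto simp: min_def)
  qed
  finally show ?thesis .
qed

definition uu :: "complex \<Rightarrow> complex" where
  "uu z = (if z = 0 then 1 else cnj z / complex_of_real (cmod z))"

lemma uu_norm[simp]: "cmod (uu z) = 1"
  by (simp add: uu_def norm_divide)

lemma uu_mult: "z * uu z = complex_of_real (cmod z)"
proof (cases "z = 0")
  case False
  have e: "z * cnj z = complex_of_real ((cmod z)\<^sup>2)" by (rule complex_norm_square[symmetric])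
  have "z * uu z = (z * cnj z) / complex_of_real (cmod z)" using False by (simp add: uu_def)
  also have "\<dots> = complex_of_real ((cmod z)\<^sup>2) / complex_of_real (cmod z)" by (simp only: e)
  also have "\<dots> = complex_of_real ((cmod z)\<^sup>2 / cmod z)" by (simp only: of_real_divide)
  also have "(cmod z)\<^sup>2 / cmod z = cmod z" using False by (simp add: power2_eq_square)
  finally show ?thesis .
qed (simp add: uu_def)

lemma uu_meas[measurable]: "uu \<in> borel_measurable borel"
  unfolding uu_def by measurable

definition phis :: "real \<Rightarrow> real \<Rightarrow> nat \<Rightarrow> real \<Rightarrow> (nat \<times> nat \<times> nat \<Rightarrow> complex) \<Rightarrow> nat \<Rightarrow> real" where
  "phis d lam N \<theta> w n = Arg (uu (w (0, n, 0))) - pi * (2 * (real n + 1) - real N - 1) * d * sin \<theta> / lam"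

lemma vv_phis: "vv d lam N \<theta> (phis d lam N \<theta> w) n = uu (w (0, n, 0))"
proof -
  let ?z = "uu (w (0, n, 0))"
  let ?s = "pi * (2 * (real n + 1) - real N - 1) * d * sin \<theta> / lam"
  have nz: "?z \<noteq> 0" by (metis norm_zero uu_norm zero_neq_one)
  have "vv d lam N \<theta> (phis d lam N \<theta> w) n = exp (\<i> * complex_of_real (Arg ?z - ?s) + \<i> * complex_of_real ?s)"
    by (simp add: vv_def phis_def steer_def exp_add)
  also have "\<i> * complex_of_real (Arg ?z - ?s) + \<i> * complex_of_real ?s = \<i> * complex_of_real (Arg ?z)"
    by (simp add: algebra_simps)
  also have "exp (\<i> * complex_of_real (Arg ?z)) = cis (Arg ?z)" by (simp add: cis_conv_exp)
  also have "\<dots> = sgn ?z" using nz by (rule cis_Arg)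
  also have "\<dots> = ?z" by (simp add: sgn_div_norm)
  finally show ?thesis .
qed

definition Tf :: "nat \<Rightarrow> nat \<Rightarrow> nat \<Rightarrow> nat \<Rightarrow> (nat \<times> nat \<times> nat \<Rightarrow> complex) \<Rightarrow> real" where
  "Tf N Mt Mr m w = (cmod (\<Sum>n<N. w (tc (min Mt Mr) m n) * uu (w (0, n, 0))))\<^sup>2"
definition Rf :: "nat \<Rightarrow> nat \<Rightarrow> nat \<Rightarrow> nat \<Rightarrow> (nat \<times> nat \<times> nat \<Rightarrow> complex) \<Rightarrow> real" where
  "Rf N Mt Mr m w = (cmod (\<Sum>n<N. w (rc (min Mt Mr) m n) * uu (w (0, n, 0))))\<^sup>2"

lemma gain_phis: "gain_obj d lam N Mt Mr \<theta> w (phis d lam N \<theta> w) = (\<Sum>m<Mt. Tf N Mt Mr m w) * (\<Sum>m<Mr. Rf N Mt Mr m w)"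
  by (simp add: gain_eq vv_phis Tf_def Rf_def)

lemma lin_int:
  fixes h :: "(nat \<times> nat \<times> nat \<Rightarrow> complex) \<Rightarrow> real" and \<iota> :: "nat \<Rightarrow> nat \<times> nat \<times> nat"
  assumes fin: "finite I" and inj: "inj_on \<iota> {..<N}" and sub: "\<iota> ` {..<N} \<subseteq> I"
    and hm: "h \<in> borel_measurable (PM I)" and h0: "\<And>w. 0 \<le> h w"
    and z: "\<And>n k. n < N \<Longrightarrow> k < N \<Longrightarrow> \<iota> k \<noteq> (0, n, 0)"
    and dep: "\<And>w w'. (\<And>j. j \<notin> \<iota> ` {..<N} \<Longrightarrow> w j = w' j) \<Longrightarrow> h w = h w'"
  shows "(\<integral>\<^sup>+w. ennreal (h w * (cmod (\<Sum>n<N. w (\<iota> n) * uu (w (0, n, 0))))\<^sup>2) \<partial>PM I) =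
         ennreal (real N) * (\<integral>\<^sup>+w. ennreal (h w) \<partial>PM I)"
proof -
  note meas_coord[measurable] hm[measurable]
  have "(\<integral>\<^sup>+w. ennreal (h w * (cmod (\<Sum>n<N. w (\<iota> n) * uu (w (0, n, 0))))\<^sup>2) \<partial>PM I) =
      (\<integral>\<^sup>+w. (\<lambda>w. ennreal (h w)) w * ennreal ((cmod (\<Sum>k<N. (\<lambda>k w. uu (w (0, k, 0))) k w * w (\<iota> k)))\<^sup>2) \<partial>PM I)"
    using h0 by (intro nn_integral_cong) (simp add: ennreal_mult mult.commute)
  also have "\<dots> = (\<integral>\<^sup>+w. (\<lambda>w. ennreal (h w)) w * ennreal (\<Sum>k<N. (cmod ((\<lambda>k w. uu (w (0, k, 0))) k w))\<^sup>2) \<partial>PM I)"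
  proof (rule lemC[OF fin inj sub])
    show "(\<lambda>w. ennreal (h w)) \<in> borel_measurable (PM I)" by measurable
    show "(\<lambda>w. uu (w (0, k, 0))) \<in> borel_measurable (PM I)" for k by measurable
  next
    fix w w' :: "nat \<times> nat \<times> nat \<Rightarrow> complex"
    assume eq: "\<And>j. j \<notin> \<iota> ` {..<N} \<Longrightarrow> w j = w' j"
    have "h w = h w'" using eq by (rule dep)
    moreover have "w (0, k, 0) = w' (0, k, 0)" if "k < N" for k
    proof (rule eq)
      show "(0, k, 0) \<notin> \<iota> ` {..<N}" using z[OF that] by force
    qed
    ultimately show "ennreal (h w) = ennreal (h w') \<and> (\<forall>k<N. uu (w (0, k, 0)) = uu (w' (0, k, 0)))"
      by auto
  qed
  also have "\<dots> = (\<integral>\<^sup>+w. ennreal (h w) * ennreal (real N) \<partial>PM I)" by simp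
  also have "\<dots> = ennreal (real N) * (\<integral>\<^sup>+w. ennreal (h w) \<partial>PM I)"
    by (subst nn_integral_multc) (auto simp: mult.commute)
  finally show ?thesis .
qed

lemma tc_lt: "m < K \<Longrightarrow> tc K m n = (0, n, m)" by (simp add: tc_def)
lemma rc_lt: "m < K \<Longrightarrow> rc K m n = (0, n, m)" by (simp add: rc_def)

lemma inj_tc: "inj_on (tc K m) A" by (auto simp: inj_on_def tc_def split: if_splits)
lemma inj_rc: "inj_on (rc K m) A" by (auto simp: inj_on_def rc_def split: if_splits)

lemma tc_mem: "m < Mt \<Longrightarrow> n < N \<Longrightarrow> tc (min Mt Mr) m n \<in> chan_index N Mt Mr"
  by (auto simp: tc_def mem_chan)
lemma rc_mem: "m < Mr \<Longrightarrow> n < N \<Longrightarrow> rc (min Mt Mr) m n \<in> chan_index N Mt Mr"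
  by (auto simp: rc_def mem_chan)

lemma tc_ne0: "1 \<le> m \<Longrightarrow> tc K m k \<noteq> (0, n, 0)" by (auto simp: tc_def)
lemma rc_ne0: "1 \<le> m \<Longrightarrow> rc K m k \<noteq> (0, n, 0)" by (auto simp: rc_def)

lemma T0_eq:
  assumes "0 < min Mt Mr"
  shows "Tf N Mt Mr 0 w = (\<Sum>n<N. cmod (w (0, n, 0)))\<^sup>2"
proof -
  have "(\<Sum>n<N. w (tc (min Mt Mr) 0 n) * uu (w (0, n, 0))) = (\<Sum>n<N. complex_of_real (cmod (w (0, n, 0))))"
    using assms by (simp add: tc_lt uu_mult)
  also have "\<dots> = complex_of_real (\<Sum>n<N. cmod (w (0, n, 0)))" by (simp only: of_real_sum)
  finally have "cmod (\<Sum>n<N. w (tc (min Mt Mr) 0 n) * uu (w (0, n, 0))) = cmod (complex_of_real (\<Sum>n<N. cmod (w (0, n, 0))))"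
    by (simp only:)
  also have "\<dots> = (\<Sum>n<N. cmod (w (0, n, 0)))"
    by (simp only: norm_of_real abs_of_nonneg[OF sum_nonneg[OF norm_ge_zero]])
  finally show ?thesis by (simp add: Tf_def)
qed

lemma R_eq_T: "m < min Mt Mr \<Longrightarrow> Rf N Mt Mr m w = Tf N Mt Mr m w"
  by (simp add: Rf_def Tf_def tc_lt rc_lt)

lemma T0_dep:
  assumes "0 < min Mt Mr" "\<And>n. n < N \<Longrightarrow> w (0, n, 0) = w' (0, n, 0)"
  shows "Tf N Mt Mr 0 w = Tf N Mt Mr 0 w'"
  using assms by (simp add: T0_eq)

lemma intT0:
  assumes K: "0 < min Mt Mr"
  shows "(\<integral>\<^sup>+w. ennreal (Tf N Mt Mr 0 w) \<partial>PM (chan_index N Mt Mr)) = ennreal (real N * (pi * (real N - 1) / 4 + 1))"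
proof -
  note meas_coord[measurable]
  let ?I = "chan_index N Mt Mr"
  have "(\<integral>\<^sup>+w. ennreal (Tf N Mt Mr 0 w) \<partial>PM ?I) =
      (\<integral>\<^sup>+w. ennreal (\<Sum>a<N. \<Sum>b<N. cmod (w (0, a, 0)) * cmod (w (0, b, 0))) \<partial>PM ?I)"
    using K by (simp add: T0_eq power2_eq_square sum_product)
  also have "\<dots> = (\<Sum>a<N. \<integral>\<^sup>+w. ennreal (\<Sum>b<N. cmod (w (0, a, 0)) * cmod (w (0, b, 0))) \<partial>PM ?I)"
    by (rule nn_sum) (auto intro!: sum_nonneg)
  also have "\<dots> = (\<Sum>a<N. \<Sum>b<N. \<integral>\<^sup>+w. ennreal (cmod (w (0, a, 0)) * cmod (w (0, b, 0))) \<partial>PM ?I)"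
    by (intro sum.cong refl nn_sum) auto
  also have "\<dots> = (\<Sum>a<N. \<Sum>b<N. ennreal (if a = b then 1 else pi / 4))"
  proof (intro sum.cong refl)
    fix a b assume ab: "a \<in> {..<N}" "b \<in> {..<N}"
    show "(\<integral>\<^sup>+w. ennreal (cmod (w (0, a, 0)) * cmod (w (0, b, 0))) \<partial>PM ?I) = ennreal (if a = b then 1 else pi / 4)"
    proof (cases "a = b")
      case True then show ?thesis using ab K E1abs[OF fin_chan, of "(0, a, 0)" N Mt Mr] by (simp add: mem_chan)
    next
      case False then show ?thesis using ab K Eabs[OF fin_chan, of "(0, b, 0)" N Mt Mr "(0, a, 0)"] by (simp add: mem_chan)
    qed
  qed
  also have "\<dots> = ennreal (\<Sum>a<N. \<Sum>b<N. if a = b then 1 else pi / 4)"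
    by (simp add: sum_nonneg)
  also have "(\<Sum>a<N. \<Sum>b<N. if a = b then 1 else pi / 4) = (\<Sum>a<N. 1 + (real N - 1) * (pi / 4))"
  proof (intro sum.cong refl)
    fix a assume "a \<in> {..<N}"
    then show "(\<Sum>b<N. if a = b then 1 else pi / 4) = 1 + (real N - 1) * (pi / 4)"
      using sum_if_eq[of "{..<N}" a 1 "pi / 4"] by simp
  qed
  also have "\<dots> = real N * (pi * (real N - 1) / 4 + 1)" by (simp add: algebra_simps)
  finally show ?thesis .
qed


lemma mTf[measurable]: "(\<lambda>w. Tf N Mt Mr m w) \<in> borel_measurable (PM I)"
proof -
  note meas_coord[measurable]
  show ?thesis unfolding Tf_def by measurable
qed

lemma mRf[measurable]: "(\<lambda>w. Rf N Mt Mr m w) \<in> borel_measurable (PM I)"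
proof -
  note meas_coord[measurable]
  show ?thesis unfolding Rf_def by measurable
qed

lemma rc_tc_disj: "1 \<le> m \<Longrightarrow> 1 \<le> m' \<Longrightarrow> \<not> (m = m' \<and> m < K) \<Longrightarrow> rc K m' n \<noteq> tc K m k"
  by (auto simp: tc_def rc_def split: if_splits)

lemma sum_cong_coord:
  assumes "\<And>n. n < N \<Longrightarrow> w (\<kappa> n) = w' (\<kappa> n)" "\<And>n. n < N \<Longrightarrow> w (0, n, 0) = w' (0, n, 0)"
  shows "(cmod (\<Sum>n<N. w (\<kappa> n) * uu (w (0, n, 0))))\<^sup>2 = (cmod (\<Sum>n<N. w' (\<kappa> n) * uu (w' (0, n, 0))))\<^sup>2"
proof -
  have "(\<Sum>n<N. w (\<kappa> n) * uu (w (0, n, 0))) = (\<Sum>n<N. w' (\<kappa> n) * uu (w' (0, n, 0)))"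
    by (rule sum.cong) (auto simp: assms)
  then show ?thesis by simp
qed

lemma Tf_nonneg[simp]: "0 \<le> Tf N Mt Mr m w" by (simp add: Tf_def)
lemma Rf_nonneg[simp]: "0 \<le> Rf N Mt Mr m w" by (simp add: Rf_def)

context
  fixes N Mt Mr :: nat
  assumes K0: "0 < min Mt Mr"
begin

lemma intT:
  assumes m: "1 \<le> m" "m < Mt"
  shows "(\<integral>\<^sup>+w. ennreal (Tf N Mt Mr m w) \<partial>PM (chan_index N Mt Mr)) = ennreal (real N)"
proof -
  have "(\<integral>\<^sup>+w. ennreal (Tf N Mt Mr m w) \<partial>PM (chan_index N Mt Mr)) =
     (\<integral>\<^sup>+w. ennreal ((\<lambda>_. 1) w * (cmod (\<Sum>n<N. w (tc (min Mt Mr) m n) * uu (w (0, n, 0))))\<^sup>2) \<partial>PM (chan_index N Mt Mr))"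
    by (simp add: Tf_def)
  also have "\<dots> = ennreal (real N) * (\<integral>\<^sup>+w. ennreal ((\<lambda>_. 1) w) \<partial>PM (chan_index N Mt Mr))"
    by (rule lin_int[OF fin_chan inj_tc]) (use m in \<open>auto simp: tc_mem tc_ne0\<close>)
  finally show ?thesis by (simp add: nn_const_PM PM_space1)
qed

lemma intR:
  assumes m: "1 \<le> m" "m < Mr"
  shows "(\<integral>\<^sup>+w. ennreal (Rf N Mt Mr m w) \<partial>PM (chan_index N Mt Mr)) = ennreal (real N)"
proof -
  have "(\<integral>\<^sup>+w. ennreal (Rf N Mt Mr m w) \<partial>PM (chan_index N Mt Mr)) =
     (\<integral>\<^sup>+w. ennreal ((\<lambda>_. 1) w * (cmod (\<Sum>n<N. w (rc (min Mt Mr) m n) * uu (w (0, n, 0))))\<^sup>2) \<partial>PM (chan_index N Mt Mr))"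
    by (simp add: Rf_def)
  also have "\<dots> = ennreal (real N) * (\<integral>\<^sup>+w. ennreal ((\<lambda>_. 1) w) \<partial>PM (chan_index N Mt Mr))"
    by (rule lin_int[OF fin_chan inj_rc]) (use m in \<open>auto simp: rc_mem rc_ne0\<close>)
  finally show ?thesis by (simp add: nn_const_PM PM_space1)
qed

lemma intT0R:
  assumes m: "1 \<le> m" "m < Mr"
  shows "(\<integral>\<^sup>+w. ennreal (Tf N Mt Mr 0 w * Rf N Mt Mr m w) \<partial>PM (chan_index N Mt Mr)) =
    ennreal (real N) * ennreal (real N * (pi * (real N - 1) / 4 + 1))"
proof -
  have "(\<integral>\<^sup>+w. ennreal (Tf N Mt Mr 0 w * Rf N Mt Mr m w) \<partial>PM (chan_index N Mt Mr)) =
     (\<integral>\<^sup>+w. ennreal (Tf N Mt Mr 0 w * (cmod (\<Sum>n<N. w (rc (min Mt Mr) m n) * uu (w (0, n, 0))))\<^sup>2) \<partial>PM (chan_index N Mt Mr))"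
    by (simp add: Rf_def)
  also have "\<dots> = ennreal (real N) * (\<integral>\<^sup>+w. ennreal (Tf N Mt Mr 0 w) \<partial>PM (chan_index N Mt Mr))"
  proof (rule lin_int[OF fin_chan inj_rc])
    fix w w' :: "nat \<times> nat \<times> nat \<Rightarrow> complex"
    assume eq: "\<And>j. j \<notin> rc (min Mt Mr) m ` {..<N} \<Longrightarrow> w j = w' j"
    show "Tf N Mt Mr 0 w = Tf N Mt Mr 0 w'"
    proof (rule T0_dep[OF K0])
      fix n assume "n < N"
      show "w (0, n, 0) = w' (0, n, 0)" using m by (intro eq) (auto simp: rc_ne0[symmetric])
    qed
  qed (use m in \<open>auto simp: rc_mem rc_ne0 intro: mTf\<close>)
  finally show ?thesis by (simp add: intT0[OF K0])
qed

lemma intTR0: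
  assumes m: "1 \<le> m" "m < Mt"
  shows "(\<integral>\<^sup>+w. ennreal (Tf N Mt Mr m w * Rf N Mt Mr 0 w) \<partial>PM (chan_index N Mt Mr)) =
    ennreal (real N) * ennreal (real N * (pi * (real N - 1) / 4 + 1))"
proof -
  have "(\<integral>\<^sup>+w. ennreal (Tf N Mt Mr m w * Rf N Mt Mr 0 w) \<partial>PM (chan_index N Mt Mr)) =
     (\<integral>\<^sup>+w. ennreal (Tf N Mt Mr 0 w * (cmod (\<Sum>n<N. w (tc (min Mt Mr) m n) * uu (w (0, n, 0))))\<^sup>2) \<partial>PM (chan_index N Mt Mr))"
    using K0 by (simp add: Tf_def R_eq_T mult.commute)
  also have "\<dots> = ennreal (real N) * (\<integral>\<^sup>+w. ennreal (Tf N Mt Mr 0 w) \<partial>PM (chan_index N Mt Mr))"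
  proof (rule lin_int[OF fin_chan inj_tc])
    fix w w' :: "nat \<times> nat \<times> nat \<Rightarrow> complex"
    assume eq: "\<And>j. j \<notin> tc (min Mt Mr) m ` {..<N} \<Longrightarrow> w j = w' j"
    show "Tf N Mt Mr 0 w = Tf N Mt Mr 0 w'"
    proof (rule T0_dep[OF K0])
      fix n assume "n < N"
      show "w (0, n, 0) = w' (0, n, 0)" using m by (intro eq) (auto simp: tc_ne0[symmetric])
    qed
  qed (use m in \<open>auto simp: tc_mem tc_ne0 intro: mTf\<close>)
  finally show ?thesis by (simp add: intT0[OF K0])
qed

lemma intTR:
  assumes m: "1 \<le> m" "m < Mt" "1 \<le> m'" "m' < Mr" and nd: "\<not> (m = m' \<and> m < min Mt Mr)"
  shows "(\<integral>\<^sup>+w. ennreal (Tf N Mt Mr m w * Rf N Mt Mr m' w) \<partial>PM (chan_index N Mt Mr)) =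
    ennreal (real N) * ennreal (real N)"
proof -
  have "(\<integral>\<^sup>+w. ennreal (Tf N Mt Mr m w * Rf N Mt Mr m' w) \<partial>PM (chan_index N Mt Mr)) =
     (\<integral>\<^sup>+w. ennreal (Rf N Mt Mr m' w * (cmod (\<Sum>n<N. w (tc (min Mt Mr) m n) * uu (w (0, n, 0))))\<^sup>2) \<partial>PM (chan_index N Mt Mr))"
    by (simp add: Tf_def mult.commute)
  also have "\<dots> = ennreal (real N) * (\<integral>\<^sup>+w. ennreal (Rf N Mt Mr m' w) \<partial>PM (chan_index N Mt Mr))"
  proof (rule lin_int[OF fin_chan inj_tc])
    fix w w' :: "nat \<times> nat \<times> nat \<Rightarrow> complex"
    assume eq: "\<And>j. j \<notin> tc (min Mt Mr) m ` {..<N} \<Longrightarrow> w j = w' j"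
    have "(cmod (\<Sum>n<N. w (rc (min Mt Mr) m' n) * uu (w (0, n, 0))))\<^sup>2 = (cmod (\<Sum>n<N. w' (rc (min Mt Mr) m' n) * uu (w' (0, n, 0))))\<^sup>2"
    proof (rule sum_cong_coord)
      fix n assume "n < N"
      show "w (rc (min Mt Mr) m' n) = w' (rc (min Mt Mr) m' n)"
        using m nd rc_tc_disj[of m m' "min Mt Mr"] by (intro eq) auto
      show "w (0, n, 0) = w' (0, n, 0)" using m by (intro eq) (auto simp: tc_ne0[symmetric])
    qed
    then show "Rf N Mt Mr m' w = Rf N Mt Mr m' w'" by (simp add: Rf_def)
  qed (use m in \<open>auto simp: tc_mem tc_ne0 intro: mRf\<close>)
  finally show ?thesis by (simp add: intR[OF m(3,4)])
qed

end

definition ccv :: "nat \<Rightarrow> real" where "ccv N = real N * (pi * (real N - 1) / 4 + 1)"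

definition Gf :: "nat \<Rightarrow> nat \<Rightarrow> nat \<Rightarrow> nat \<Rightarrow> nat \<Rightarrow> (nat \<times> nat \<times> nat \<Rightarrow> complex) \<Rightarrow> real" where
  "Gf N Mt Mr m m' w = (if m = 0 \<and> m' = 0 then 2 * ccv N * Tf N Mt Mr 0 w
     else if m = m' \<and> m < min Mt Mr then 2 * real N * Tf N Mt Mr m w else Tf N Mt Mr m w * Rf N Mt Mr m' w)"

definition Ef :: "nat \<Rightarrow> nat \<Rightarrow> nat \<Rightarrow> nat \<Rightarrow> nat \<Rightarrow> real" where
  "Ef N Mt Mr m m' = (if m = 0 \<and> m' = 0 then (ccv N)\<^sup>2 else if m = m' \<and> m < min Mt Mr then (real N)\<^sup>2 else 0)"

definition al :: "nat \<Rightarrow> nat \<Rightarrow> real" where "al N m = (if m = 0 then ccv N else real N)"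

lemma ccv_nonneg: "0 \<le> ccv N"
proof (cases N)
  case (Suc n) then show ?thesis by (simp add: ccv_def)
qed (simp add: ccv_def)

lemma Ef_nonneg: "0 \<le> Ef N Mt Mr m m'" by (simp add: Ef_def)
lemma al_nonneg: "0 \<le> al N m" by (simp add: al_def ccv_nonneg)

lemma sq_ineq: "2 * c * t \<le> t * t + c\<^sup>2" for c t :: real
proof -
  have "0 \<le> (t - c)\<^sup>2" by simp
  then show ?thesis by (simp add: power2_eq_square algebra_simps)
qed

lemma G_le:
  assumes K0: "0 < min Mt Mr"
  shows "Gf N Mt Mr m m' w \<le> Tf N Mt Mr m w * Rf N Mt Mr m' w + Ef N Mt Mr m m'"
proof -
  consider "m = 0 \<and> m' = 0" | "\<not> (m = 0 \<and> m' = 0)" "m = m' \<and> m < min Mt Mr" | "\<not> (m = 0 \<and> m' = 0)" "\<not> (m = m' \<and> m < min Mt Mr)" by blast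
  then show ?thesis
  proof cases
    case 1
    then have "m = 0" "m' = 0" by auto
    then show ?thesis unfolding Gf_def Ef_def if_P[OF 1]
      using K0 sq_ineq[of "ccv N" "Tf N Mt Mr 0 w"] R_eq_T[OF K0, of N w] by (simp add: power2_eq_square)
  next
    case 2
    then have "m' = m" "m < min Mt Mr" by auto
    then show ?thesis unfolding Gf_def Ef_def if_not_P[OF 2(1)] if_P[OF 2(2)]
      using sq_ineq[of "real N" "Tf N Mt Mr m w"] R_eq_T[of m Mt Mr N w] by (simp add: power2_eq_square)
  next
    case 3
    then show ?thesis unfolding Gf_def Ef_def if_not_P[OF 3(1)] if_not_P[OF 3(2)] by simp
  qed
qed

lemma G_int:
  assumes K0: "0 < min Mt Mr" and m: "m < Mt" "m' < Mr"
  shows "(\<integral>\<^sup>+w. ennreal (Gf N Mt Mr m m' w) \<partial>PM (chan_index N Mt Mr)) = ennreal (al N m * al N m' + Ef N Mt Mr m m')"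
proof -
  let ?I = "chan_index N Mt Mr"
  have c0: "0 \<le> ccv N" by (rule ccv_nonneg)
  consider "m = 0 \<and> m' = 0" | "m = 0" "m' \<noteq> 0" | "m \<noteq> 0" "m' = 0"
    | "m \<noteq> 0" "m' \<noteq> 0" "m = m' \<and> m < min Mt Mr" | "m \<noteq> 0" "m' \<noteq> 0" "\<not> (m = m' \<and> m < min Mt Mr)" by blast
  then show ?thesis
  proof cases
    case 1
    then have "(\<integral>\<^sup>+w. ennreal (Gf N Mt Mr m m' w) \<partial>PM ?I) = (\<integral>\<^sup>+w. ennreal (2 * ccv N) * ennreal (Tf N Mt Mr 0 w) \<partial>PM ?I)"
      using c0 by (intro nn_integral_cong) (simp add: Gf_def ennreal_mult)
    also have "\<dots> = ennreal (2 * ccv N) * ennreal (ccv N)"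
      by (simp add: nn_integral_cmult intT0[OF K0] ccv_def)
    finally show ?thesis using 1 c0 by (simp add: al_def Ef_def ennreal_mult[symmetric] power2_eq_square)
  next
    case 2
    then have "(\<integral>\<^sup>+w. ennreal (Gf N Mt Mr m m' w) \<partial>PM ?I) = (\<integral>\<^sup>+w. ennreal (Tf N Mt Mr 0 w * Rf N Mt Mr m' w) \<partial>PM ?I)"
      by (simp add: Gf_def)
    also have "\<dots> = ennreal (real N) * ennreal (ccv N)"
      using 2 m by (simp add: intT0R[OF K0] ccv_def)
    finally show ?thesis using 2 c0 by (simp add: al_def Ef_def ennreal_mult[symmetric] mult.commute)
  next
    case 3
    then have "(\<integral>\<^sup>+w. ennreal (Gf N Mt Mr m m' w) \<partial>PM ?I) = (\<integral>\<^sup>+w. ennreal (Tf N Mt Mr m w * Rf N Mt Mr 0 w) \<partial>PM ?I)"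
      by (simp add: Gf_def)
    also have "\<dots> = ennreal (real N) * ennreal (ccv N)"
      using 3 m by (simp add: intTR0[OF K0] ccv_def)
    finally show ?thesis using 3 c0 by (simp add: al_def Ef_def ennreal_mult[symmetric])
  next
    case 4
    then have "(\<integral>\<^sup>+w. ennreal (Gf N Mt Mr m m' w) \<partial>PM ?I) = (\<integral>\<^sup>+w. ennreal (2 * real N) * ennreal (Tf N Mt Mr m w) \<partial>PM ?I)"
      by (intro nn_integral_cong) (simp add: Gf_def ennreal_mult)
    also have "\<dots> = ennreal (2 * real N) * ennreal (real N)"
      using 4 m by (simp add: nn_integral_cmult intT[OF K0])
    finally show ?thesis using 4 by (simp add: al_def Ef_def ennreal_mult[symmetric] power2_eq_square)
  next
    case 5
    then have n0: "\<not> (m = 0 \<and> m' = 0)" by auto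
    then have "(\<integral>\<^sup>+w. ennreal (Gf N Mt Mr m m' w) \<partial>PM ?I) = (\<integral>\<^sup>+w. ennreal (Tf N Mt Mr m w * Rf N Mt Mr m' w) \<partial>PM ?I)"
      unfolding Gf_def if_not_P[OF n0] if_not_P[OF 5(3)] by simp
    also have "\<dots> = ennreal (real N) * ennreal (real N)"
      using 5 m by (intro intTR[OF K0]) auto
    moreover have "Ef N Mt Mr m m' = 0" unfolding Ef_def if_not_P[OF n0] if_not_P[OF 5(3)] by simp
    ultimately show ?thesis using 5 by (simp add: al_def ennreal_mult[symmetric])
  qed
qed

lemma gain_le_gamma: "gain_obj d lam N Mt Mr \<theta> w \<phi> \<le> gamma1_star d lam N Mt Mr \<theta> w"
proof -
  have bdd: "bdd_above (range (gain_obj d lam N Mt Mr \<theta> w))"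
    by (rule bdd_aboveI[where M="Uf N Mt Mr w"]) (auto intro: gain_le_U)
  show ?thesis unfolding gamma1_star_def by (rule cSUP_upper[OF UNIV_I bdd])
qed

lemma sum_al: "0 < M \<Longrightarrow> (\<Sum>m<M. al N m) = ccv N + (real M - 1) * real N"
  using sum_if_eq[of "{..<M}" 0 "ccv N" "real N"] by (simp add: al_def eq_commute)

lemma lower:
  assumes M: "Mt > 0" "Mr > 0"
  shows "ennreal ((real N)\<^sup>2 * (pi * (real N - 1) / 4 + real (min Mt Mr))
                             * (pi * (real N - 1) / 4 + real (max Mt Mr)))
           \<le> (\<integral>\<^sup>+ w. ennreal (gamma1_star d lam N Mt Mr \<theta> w) \<partial>chan_space N Mt Mr)"
proof -
  let ?I = "chan_index N Mt Mr"
  have K0: "0 < min Mt Mr" using M by simp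
  define L where "L w = (\<Sum>m<Mt. \<Sum>m'<Mr. Tf N Mt Mr m w * Rf N Mt Mr m' w)" for w
  define ES where "ES = (\<Sum>m<Mt. \<Sum>m'<Mr. Ef N Mt Mr m m')"
  define AA where "AA = (ccv N + (real Mt - 1) * real N) * (ccv N + (real Mr - 1) * real N)"
  have AA0: "0 \<le> AA" unfolding AA_def using M ccv_nonneg[of N]
    by (intro mult_nonneg_nonneg add_nonneg_nonneg) auto
  have ES0: "0 \<le> ES" unfolding ES_def by (intro sum_nonneg Ef_nonneg)
  have L0: "0 \<le> L w" for w unfolding L_def by (intro sum_nonneg mult_nonneg_nonneg Tf_nonneg Rf_nonneg)
  have mL[measurable]: "L \<in> borel_measurable (PM ?I)" unfolding L_def by measurable
  have mG[measurable]: "(\<lambda>w. Gf N Mt Mr m m' w) \<in> borel_measurable (PM ?I)" for m m' unfolding Gf_def by measurable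
  have G0: "0 \<le> Gf N Mt Mr m m' w" for m m' w unfolding Gf_def using ccv_nonneg[of N] by auto
  have "(\<integral>\<^sup>+w. ennreal (\<Sum>m<Mt. \<Sum>m'<Mr. Gf N Mt Mr m m' w) \<partial>PM ?I) =
      (\<Sum>m<Mt. \<integral>\<^sup>+w. ennreal (\<Sum>m'<Mr. Gf N Mt Mr m m' w) \<partial>PM ?I)"
    by (rule nn_sum) (auto intro!: sum_nonneg G0)
  also have "\<dots> = (\<Sum>m<Mt. \<Sum>m'<Mr. \<integral>\<^sup>+w. ennreal (Gf N Mt Mr m m' w) \<partial>PM ?I)"
    by (intro sum.cong refl nn_sum) (auto intro: G0)
  also have "\<dots> = (\<Sum>m<Mt. \<Sum>m'<Mr. ennreal (al N m * al N m' + Ef N Mt Mr m m'))"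
    by (intro sum.cong refl G_int[OF K0]) auto
  also have "\<dots> = (\<Sum>m<Mt. ennreal (\<Sum>m'<Mr. al N m * al N m' + Ef N Mt Mr m m'))"
    by (intro sum.cong refl sum_ennreal add_nonneg_nonneg mult_nonneg_nonneg al_nonneg Ef_nonneg)
  also have "\<dots> = ennreal (\<Sum>m<Mt. \<Sum>m'<Mr. al N m * al N m' + Ef N Mt Mr m m')"
    by (intro sum_ennreal sum_nonneg add_nonneg_nonneg mult_nonneg_nonneg al_nonneg Ef_nonneg)
  also have "(\<Sum>m<Mt. \<Sum>m'<Mr. al N m * al N m' + Ef N Mt Mr m m') = AA + ES"
    unfolding AA_def ES_def sum.distrib sum_product[symmetric] sum_al[OF M(1)] sum_al[OF M(2)] ..
  finally have eqG: "(\<integral>\<^sup>+w. ennreal (\<Sum>m<Mt. \<Sum>m'<Mr. Gf N Mt Mr m m' w) \<partial>PM ?I) = ennreal (AA + ES)" .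
  have "(\<integral>\<^sup>+w. ennreal (\<Sum>m<Mt. \<Sum>m'<Mr. Gf N Mt Mr m m' w) \<partial>PM ?I) \<le> (\<integral>\<^sup>+w. ennreal (L w + ES) \<partial>PM ?I)"
  proof (intro nn_integral_mono ennreal_leI)
    fix w
    have "(\<Sum>m<Mt. \<Sum>m'<Mr. Gf N Mt Mr m m' w) \<le> (\<Sum>m<Mt. \<Sum>m'<Mr. Tf N Mt Mr m w * Rf N Mt Mr m' w + Ef N Mt Mr m m')"
      by (intro sum_mono G_le[OF K0])
    then show "(\<Sum>m<Mt. \<Sum>m'<Mr. Gf N Mt Mr m m' w) \<le> L w + ES"
      by (simp add: L_def ES_def sum.distrib)
  qed
  also have "\<dots> = (\<integral>\<^sup>+w. ennreal (L w) + ennreal ES \<partial>PM ?I)"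
    using L0 ES0 by (intro nn_integral_cong) simp
  also have "\<dots> = (\<integral>\<^sup>+w. ennreal (L w) \<partial>PM ?I) + ennreal ES"
    by (subst nn_integral_add) (auto simp: nn_const_PM PM_space1)
  finally have "ennreal AA + ennreal ES \<le> (\<integral>\<^sup>+w. ennreal (L w) \<partial>PM ?I) + ennreal ES"
    unfolding eqG using ES0 AA0 by (subst ennreal_plus[symmetric]) auto
  then have AAle: "ennreal AA \<le> (\<integral>\<^sup>+w. ennreal (L w) \<partial>PM ?I)"
    using ennreal_add_left_cancel_le[of "ennreal ES" "ennreal AA"] by (simp add: add.commute)
  have Lg: "L w \<le> gamma1_star d lam N Mt Mr \<theta> w" for w
  proof -
    have "L w = gain_obj d lam N Mt Mr \<theta> w (phis d lam N \<theta> w)"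
      by (simp add: gain_phis L_def sum_product)
    then show ?thesis using gain_le_gamma by simp
  qed
  have "(\<integral>\<^sup>+w. ennreal (L w) \<partial>PM ?I) \<le> (\<integral>\<^sup>+w. ennreal (gamma1_star d lam N Mt Mr \<theta> w) \<partial>PM ?I)"
    by (intro nn_integral_mono ennreal_leI Lg)
  moreover have "(real N)\<^sup>2 * (pi * (real N - 1) / 4 + real (min Mt Mr)) * (pi * (real N - 1) / 4 + real (max Mt Mr)) = AA"
  proof -
    have e: "ccv N + (real k - 1) * real N = real N * (pi * (real N - 1) / 4 + real k)" for k
      by (simp add: ccv_def algebra_simps)
    show ?thesis
    proof (cases "Mt \<le> Mr")
      case True
      then have "min Mt Mr = Mt" "max Mt Mr = Mr" by auto
      then show ?thesis unfolding AA_def e by (simp add: power2_eq_square mult_ac)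
    next
      case False
      then have "min Mt Mr = Mr" "max Mt Mr = Mt" by auto
      then show ?thesis unfolding AA_def e by (simp add: power2_eq_square mult_ac)
    qed
  qed
  ultimately show ?thesis using AAle unfolding chan_space_def by simp
qed

theorem proposition3:
  fixes d lam \<theta> :: real and N Mt Mr :: nat
  assumes "d > 0" and "lam > 0"
    and "N > 0" and "even N" and "Mt > 0" and "Mr > 0"
  shows "ennreal ((real N)\<^sup>2 * (pi * (real N - 1) / 4 + real (min Mt Mr))
                             * (pi * (real N - 1) / 4 + real (max Mt Mr)))
           \<le> (\<integral>\<^sup>+ w. ennreal (gamma1_star d lam N Mt Mr \<theta> w) \<partial>chan_space N Mt Mr)
       \<and> (\<integral>\<^sup>+ w. ennreal (gamma1_star d lam N Mt Mr \<theta> w) \<partial>chan_space N Mt Mr)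
           \<le> ennreal ((real N)\<^sup>2 * ((real Mt + real Mr + (1 - 3 * real (min Mt Mr)) / 2)
                             * real (min Mt Mr) * (real N)\<^sup>2 + 2 * real (min Mt Mr) * real N))"
  using lower[OF assms(5,6), of N d lam \<theta>] upper[OF assms(3,4,5,6), of d lam \<theta>] by blast

end
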